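(* In the setting below, the Markov chain on $\mathcal{G}$ defined by iterating the Weighted Graph Sampler is ergodic with respect to the uniform distribution on $\mathcal{G}$; in particular it is reversible with respect to the uniform distribution and any $G'\in\mathcal{G}$ can be reached from any $G\in\mathcal{G}$ with positive probability.
   Context: Setting (weighted graphs). $V$ is a finite vertex set. An integer-weighted graph is $G=(V,E,c)$ with $c:V\times V\to\mathbb{N}_0$ and $E(G)=\{uv: c(uv)>0\}$; graphs are all directed or all undirected (if undirected $uv=vu$). The out-/in-strength of a vertex is the sum of weights of edges from/to it (strength if undirected). $G_0$ is a given weighted graph and $\mathcal{F}$ a given set of possible edges. $\mathcal{G}$ is the set of weighted graphs $G$ on $V$ with the same strength sequence as $G_0$ (in- and out-strengths if directed) and $c_G(uv)=c_{G_0}(uv)$ for all $uv\in\mathcal{F}$. Define $N_G(u)=\{v: vu\in E(G), vu\notin\mathcal{F}\}$ and $M_G(u)=\{v: uv\notin\mathcal{F}\}$. Kernel selection from $G$: $W_{-1}=*$; sample $W_0$ uniformly from $\{v: N_G(v)\ne\emptyset\}$; $n=0$; repeat: (1) if $N_G(W_n)\setminus\{W_{n-1}\}=\emptyset$ stop and return "identity"; else sample $W_{n+1}$ uniformly from it; (2) if $W_0\in M_G(W_{n+1})\setminus\{W_n\}$, set $W_{n+2}=W_0$ and stop, returning $w=W_0W_1\cdots W_{n+1}W_0$; else if $M_G(W_{n+1})\setminus\{W_n\}=\emptyset$ stop and return "identity"; else sample $W_{n+2}$ uniformly from it and set $n\leftarrow n+2$. (The graph is not modified during this selection.) For a sequence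 $w=w_0w_1\cdots w_kw_0$ ($k$ odd), let $n_w(uv)$ be the number of occurrences of $uv$ among $w_1w_0,w_3w_2,\dots,w_kw_{k-1}$ minus the number among $w_1w_2,w_3w_4,\dots,w_kw_0$. For a graph $G'$, let $\mathbb{V}_{G'}(z)$ denote the probability that kernel selection from $G'$ returns $w$ or its reverse $w^r$ ($z=\{w,w^r\}$). Weighted Graph Sampler (one iteration from $G\in\mathcal{G}$): run kernel selection; if it returns "identity", stay at $G$. Otherwise, with $w$ returned, let $[\Delta_{low},\Delta_{up}]$ be the set of integers $\Delta$ for which the graph $G_\Delta$ with weights $c_G(uv)+n_w(uv)\Delta$ for all $uv$ lies in $\mathcal{G}$ (i.e. all weights nonnegative); sample $\Delta$ from this set with probability proportional to $\mathbb{V}_{G_\Delta}(z)$, and move to $G_\Delta$. *)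

theory Defs
  imports "HOL-Analysis.Analysis" "HOL-Library.Extended_Nonnegative_Real"
begin

text \<open>The flag d is True for directed graphs, False for undirected graphs; in the undirected case
  a graph is a symmetric weight function (uv = vu).\<close>

type_synonym 'v wgraph = "'v \<Rightarrow> 'v \<Rightarrow> nat"

definition is_graph :: "bool \<Rightarrow> 'v wgraph \<Rightarrow> bool" where
  "is_graph d c \<longleftrightarrow> d \<or> (\<forall>u v. c u v = c v u)"

definition out_strength :: "'v::finite wgraph \<Rightarrow> 'v \<Rightarrow> nat" where
  "out_strength c u = (\<Sum>v\<in>UNIV. c u v)"

definition in_strength :: "'v::finite wgraph \<Rightarrow> 'v \<Rightarrow> nat" where
  "in_strength c u = (\<Sum>v\<in>UNIV. c v u)"

text \<open>Undirected strength: a loop uu contributes twice (each end of the edge).\<close>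
definition ustrength :: "'v::finite wgraph \<Rightarrow> 'v \<Rightarrow> nat" where
  "ustrength c u = (\<Sum>v\<in>UNIV. c u v) + c u u"

definition same_strengths :: "bool \<Rightarrow> 'v::finite wgraph \<Rightarrow> 'v wgraph \<Rightarrow> bool" where
  "same_strengths d c c' \<longleftrightarrow>
     (if d then (\<forall>u. out_strength c u = out_strength c' u \<and> in_strength c u = in_strength c' u)
      else (\<forall>u. ustrength c u = ustrength c' u))"

definition in_F :: "bool \<Rightarrow> ('v \<times> 'v) set \<Rightarrow> 'v \<Rightarrow> 'v \<Rightarrow> bool" where
  "in_F d F u v \<longleftrightarrow> (u, v) \<in> F \<or> (\<not> d \<and> (v, u) \<in> F)"

definition graph_space :: "bool \<Rightarrow> ('v \<times> 'v) set \<Rightarrow> 'v::finite wgraph \<Rightarrow> 'v wgraph set" where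
  "graph_space d F G0 = {c. is_graph d c \<and> same_strengths d G0 c \<and>
                            (\<forall>u v. in_F d F u v \<longrightarrow> c u v = G0 u v)}"

definition Nbr :: "bool \<Rightarrow> ('v \<times> 'v) set \<Rightarrow> 'v wgraph \<Rightarrow> 'v \<Rightarrow> 'v set" where
  "Nbr d F c u = {v. 0 < c v u \<and> \<not> in_F d F v u}"

definition Mset :: "bool \<Rightarrow> ('v \<times> 'v) set \<Rightarrow> 'v \<Rightarrow> 'v set" where
  "Mset d F u = {v. \<not> in_F d F u v}"

definition start_set :: "bool \<Rightarrow> ('v \<times> 'v) set \<Rightarrow> 'v wgraph \<Rightarrow> 'v set" where
  "start_set d F c = {v. Nbr d F c v \<noteq> {}}"

definition unif_pick :: "'v set \<Rightarrow> 'v \<Rightarrow> real" where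
  "unif_pick A x = (if x \<in> A then 1 / real (card A) else 0)"

text \<open>Probability of the j-th sampling step (1 \<le> j \<le> k) of kernel selection producing w!j,
  given that the previous steps produced w!0, ..., w!(j-1).
  Odd j: step (1) from W_(j-1), excluding W_(j-2) (nothing excluded for j = 1).
  Even j: step (2) at W_(j-1) did not close (W_0 not in M(W_(j-1)) - {W_(j-2)}), and sampled w!j.\<close>
definition step_factor :: "bool \<Rightarrow> ('v \<times> 'v) set \<Rightarrow> 'v wgraph \<Rightarrow> 'v list \<Rightarrow> nat \<Rightarrow> real" where
  "step_factor d F c w j =
     (if odd j then unif_pick (Nbr d F c (w ! (j - 1)) - (if j = 1 then {} else {w ! (j - 2)})) (w ! j)
      else (if w ! 0 \<in> Mset d F (w ! (j - 1)) - {w ! (j - 2)} then 0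
            else unif_pick (Mset d F (w ! (j - 1)) - {w ! (j - 2)}) (w ! j)))"

text \<open>Probability that kernel selection from the graph c returns the sequence
  w_0 w_1 ... w_k w_0 (k odd), represented by the list [w_0, ..., w_k].\<close>
definition sel_prob :: "bool \<Rightarrow> ('v \<times> 'v) set \<Rightarrow> 'v::finite wgraph \<Rightarrow> 'v list \<Rightarrow> real" where
  "sel_prob d F c w =
     (let k = length w - 1 in
      if even (length w) \<and> 2 \<le> length w then
        unif_pick (start_set d F c) (w ! 0) *
        (\<Prod>j\<in>{1..k}. step_factor d F c w j) *
        (if w ! 0 \<in> Mset d F (w ! k) - {w ! (k - 1)} then 1 else 0)
      else 0)"

text \<open>Reverse of w_0 w_1 ... w_k w_0, i.e. w_0 w_k ... w_1 w_0.\<close>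
definition wrev :: "'v list \<Rightarrow> 'v list" where
  "wrev w = hd w # rev (tl w)"

definition Vprob :: "bool \<Rightarrow> ('v \<times> 'v) set \<Rightarrow> 'v::finite wgraph \<Rightarrow> 'v list \<Rightarrow> real" where
  "Vprob d F c w = (\<Sum>x\<in>{w, wrev w}. sel_prob d F c x)"

definition plus_pairs :: "'v list \<Rightarrow> ('v \<times> 'v) list" where
  "plus_pairs w = map (\<lambda>i. (w ! (2 * i + 1), w ! (2 * i))) [0..<length w div 2]"

definition minus_pairs :: "'v list \<Rightarrow> ('v \<times> 'v) list" where
  "minus_pairs w = map (\<lambda>i. (w ! (2 * i + 1), w ! ((2 * i + 2) mod length w))) [0..<length w div 2]"

definition is_edge :: "bool \<Rightarrow> 'v \<Rightarrow> 'v \<Rightarrow> 'v \<times> 'v \<Rightarrow> bool" where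
  "is_edge d u v p \<longleftrightarrow> p = (u, v) \<or> (\<not> d \<and> p = (v, u))"

definition n_w :: "bool \<Rightarrow> 'v list \<Rightarrow> 'v \<Rightarrow> 'v \<Rightarrow> int" where
  "n_w d w u v = int (length (filter (is_edge d u v) (plus_pairs w)))
               - int (length (filter (is_edge d u v) (minus_pairs w)))"

text \<open>G_\<Delta>, with weights c(uv) + n_w(uv) \<Delta> (only meaningful when these are nonnegative).\<close>
definition shift :: "bool \<Rightarrow> 'v list \<Rightarrow> 'v wgraph \<Rightarrow> int \<Rightarrow> 'v wgraph" where
  "shift d w c \<Delta> = (\<lambda>u v. nat (int (c u v) + n_w d w u v * \<Delta>))"

definition Dset :: "bool \<Rightarrow> ('v \<times> 'v) set \<Rightarrow> 'v::finite wgraph \<Rightarrow> 'v wgraph \<Rightarrow> 'v list \<Rightarrow> int set" where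
  "Dset d F G0 c w = {\<Delta>. (\<forall>u v. 0 \<le> int (c u v) + n_w d w u v * \<Delta>) \<and>
                            shift d w c \<Delta> \<in> graph_space d F G0}"

definition move_prob :: "bool \<Rightarrow> ('v \<times> 'v) set \<Rightarrow> 'v::finite wgraph \<Rightarrow> 'v wgraph \<Rightarrow> 'v wgraph \<Rightarrow> ennreal" where
  "move_prob d F G0 c c' =
     (\<Sum>\<^sub>\<infinity>w. ennreal (sel_prob d F c w) *
        (\<Sum>\<^sub>\<infinity>\<Delta>\<in>{\<Delta> \<in> Dset d F G0 c w. shift d w c \<Delta> = c'}. ennreal (Vprob d F (shift d w c \<Delta>) w)) /
        (\<Sum>\<^sub>\<infinity>\<Delta>\<in>Dset d F G0 c w. ennreal (Vprob d F (shift d w c \<Delta>) w)))"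

definition id_prob :: "bool \<Rightarrow> ('v \<times> 'v) set \<Rightarrow> 'v::finite wgraph \<Rightarrow> ennreal" where
  "id_prob d F c = 1 - (\<Sum>\<^sub>\<infinity>w. ennreal (sel_prob d F c w))"

definition wgs_trans :: "bool \<Rightarrow> ('v \<times> 'v) set \<Rightarrow> 'v::finite wgraph \<Rightarrow> 'v wgraph \<Rightarrow> 'v wgraph \<Rightarrow> ennreal" where
  "wgs_trans d F G0 c c' = move_prob d F G0 c c' + (if c' = c then id_prob d F c else 0)"

end

theory Submission
  imports Defs
begin


lemma unif_pick_nonneg: "0 \<le> unif_pick A x"
  by (simp add: unif_pick_def)

lemma step_factor_nonneg: "0 \<le> step_factor d F c w j"
  by (simp add: step_factor_def unif_pick_nonneg)

lemma sel_prob_nonneg: "0 \<le> sel_prob d F c w"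
  by (auto simp: sel_prob_def Let_def unif_pick_nonneg step_factor_nonneg intro!: mult_nonneg_nonneg prod_nonneg)

lemma sel_prob_E: "sel_prob d F c w \<noteq> 0 \<Longrightarrow> even (length w) \<and> 2 \<le> length w"
  by (auto simp: sel_prob_def Let_def split: if_splits)

lemma Vprob_nonneg: "0 \<le> Vprob d F c w"
  by (simp add: Vprob_def sum_nonneg sel_prob_nonneg)

lemma wrev_length: "w \<noteq> [] \<Longrightarrow> length (wrev w) = length w"
  by (cases w) (auto simp: wrev_def)

lemma wrev_wrev: "w \<noteq> [] \<Longrightarrow> wrev (wrev w) = w"
  by (cases w) (auto simp: wrev_def)

lemma wrev_nth0: "w \<noteq> [] \<Longrightarrow> wrev w ! 0 = w ! 0"
  by (cases w) (auto simp: wrev_def)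

lemma wrev_nth: assumes j: "1 \<le> j" "j < length w" shows "wrev w ! j = w ! (length w - j)"
proof (cases w)
  case Nil then show ?thesis using j by simp
next
  case (Cons a xs)
  have "wrev w ! j = rev xs ! (j - 1)" using Cons j by (cases j) (auto simp: wrev_def)
  also have "\<dots> = xs ! (length xs - 1 - (j - 1))" using Cons j by (simp add: rev_nth)
  also have "\<dots> = w ! (length w - j)" using Cons j
    by (metis Suc_diff_Suc diff_Suc_1 diff_diff_left le_add_diff_inverse length_Cons less_Suc_eq_le nth_Cons_Suc plus_1_eq_Suc)
  finally show ?thesis .
qed

lemma Vprob_eq: "Vprob d F c w = sel_prob d F c w + (if wrev w \<noteq> w then sel_prob d F c (wrev w) else 0)"
  by (auto simp: Vprob_def)

lemma Vprob_wrev: "w \<noteq> [] \<Longrightarrow> Vprob d F c (wrev w) = Vprob d F c w"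
  unfolding Vprob_def by (simp add: wrev_wrev insert_commute)

lemma plus_pairs_wrev:
  assumes "even (length w)" "2 \<le> length w"
  shows "plus_pairs (wrev w) = rev (minus_pairs w)"
proof (rule nth_equalityI)
  have ne: "w \<noteq> []" using assms by auto
  show "length (plus_pairs (wrev w)) = length (rev (minus_pairs w))"
    by (simp add: plus_pairs_def minus_pairs_def wrev_length[OF ne])
  fix i assume "i < length (plus_pairs (wrev w))"
  then have i: "i < length w div 2" by (simp add: plus_pairs_def wrev_length[OF ne])
  define L where "L = length w"
  have L: "even L" "2 \<le> L" using assms L_def by auto
  have lhs: "plus_pairs (wrev w) ! i = (wrev w ! (2*i+1), wrev w ! (2*i))"
    using i by (simp add: plus_pairs_def wrev_length[OF ne])
  have rhs: "rev (minus_pairs w) ! i = (w ! (2*(L div 2 - 1 - i)+1), w ! ((2*(L div 2 - 1 - i)+2) mod L))"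
    using i by (simp add: rev_nth minus_pairs_def L_def)
  have a: "wrev w ! (2*i+1) = w ! (2*(L div 2 - 1 - i)+1)"
    using i L by (subst wrev_nth) (auto simp: L_def[symmetric] intro!: arg_cong[where f="(!) w"])
  have b: "wrev w ! (2*i) = w ! ((2*(L div 2 - 1 - i)+2) mod L)"
  proof (cases "i = 0")
    case True
    have "2*(L div 2 - 1 - i)+2 = L" using True L by auto
    then show ?thesis using True L ne by (simp add: wrev_nth0)
  next
    case False
    have "2*(L div 2 - 1 - i)+2 < L" using False i L L_def by auto
    then show ?thesis using i L False
      by (subst wrev_nth) (auto simp: L_def[symmetric] intro!: arg_cong[where f="(!) w"])
  qed
  show "plus_pairs (wrev w) ! i = rev (minus_pairs w) ! i" using lhs rhs a b by simp
qed

lemma minus_pairs_wrev: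
  assumes "even (length w)" "2 \<le> length w"
  shows "minus_pairs (wrev w) = rev (plus_pairs w)"
proof (rule nth_equalityI)
  have ne: "w \<noteq> []" using assms by auto
  show "length (minus_pairs (wrev w)) = length (rev (plus_pairs w))"
    by (simp add: plus_pairs_def minus_pairs_def wrev_length[OF ne])
  fix i assume "i < length (minus_pairs (wrev w))"
  then have i: "i < length w div 2" by (simp add: minus_pairs_def wrev_length[OF ne])
  define L where "L = length w"
  have L: "even L" "2 \<le> L" using assms L_def by auto
  have lhs: "minus_pairs (wrev w) ! i = (wrev w ! (2*i+1), wrev w ! ((2*i+2) mod L))"
    using i by (simp add: minus_pairs_def wrev_length[OF ne] L_def)
  have rhs: "rev (plus_pairs w) ! i = (w ! (2*(L div 2 - 1 - i)+1), w ! (2*(L div 2 - 1 - i)))"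
    using i by (simp add: rev_nth plus_pairs_def L_def)
  have a: "wrev w ! (2*i+1) = w ! (2*(L div 2 - 1 - i)+1)"
    using i L by (subst wrev_nth) (auto simp: L_def[symmetric] intro!: arg_cong[where f="(!) w"])
  have b: "wrev w ! ((2*i+2) mod L) = w ! (2*(L div 2 - 1 - i))"
  proof (cases "2*i+2 = L")
    case True then show ?thesis using L ne by (simp add: wrev_nth0)
  next
    case False
    then have "2*i+2 < L" using i L L_def by auto
    then show ?thesis using i L False
      by (subst wrev_nth) (auto simp: L_def[symmetric] intro!: arg_cong[where f="(!) w"])
  qed
  show "minus_pairs (wrev w) ! i = rev (plus_pairs w) ! i" using lhs rhs a b by simp
qed

lemma n_w_wrev:
  assumes "even (length w)" "2 \<le> length w"
  shows "n_w d (wrev w) u v = - n_w d w u v"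
  by (simp add: n_w_def plus_pairs_wrev[OF assms] minus_pairs_wrev[OF assms] rev_filter[symmetric])


definition Aset :: "bool \<Rightarrow> ('v \<times> 'v) set \<Rightarrow> 'v::finite wgraph \<Rightarrow> 'v wgraph \<Rightarrow> 'v wgraph \<Rightarrow> 'v list \<Rightarrow> int set" where
  "Aset d F G0 c c' w = {\<Delta> \<in> Dset d F G0 c w. shift d w c \<Delta> = c'}"

definition Den :: "bool \<Rightarrow> ('v \<times> 'v) set \<Rightarrow> 'v::finite wgraph \<Rightarrow> 'v wgraph \<Rightarrow> 'v list \<Rightarrow> ennreal" where
  "Den d F G0 c w = (\<Sum>\<^sub>\<infinity>\<Delta>\<in>Dset d F G0 c w. ennreal (Vprob d F (shift d w c \<Delta>) w))"

definition Yf :: "bool \<Rightarrow> ('v \<times> 'v) set \<Rightarrow> 'v::finite wgraph \<Rightarrow> 'v wgraph \<Rightarrow> 'v wgraph \<Rightarrow> 'v list \<Rightarrow> ennreal" where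
  "Yf d F G0 c c' w = of_nat (card (Aset d F G0 c c' w)) / Den d F G0 c w"

lemma shift_int:
  assumes "0 \<le> int (c u v) + n_w d w u v * \<Delta>"
  shows "int (shift d w c \<Delta> u v) = int (c u v) + n_w d w u v * \<Delta>"
  using assms by (simp add: shift_def)

lemma Dset_translate:
  assumes nn: "\<forall>u v. 0 \<le> int (c u v) + n_w d w u v * \<Delta>0"
  and c': "c' = shift d w c \<Delta>0"
  shows "\<Delta> \<in> Dset d F G0 c' w \<longleftrightarrow> \<Delta> + \<Delta>0 \<in> Dset d F G0 c w"
    and "shift d w c' \<Delta> = shift d w c (\<Delta> + \<Delta>0)"
proof -
  have ic: "int (c' u v) = int (c u v) + n_w d w u v * \<Delta>0" for u v
    using nn c' shift_int by (simp add: shift_def)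
  have e: "int (c' u v) + n_w d w u v * \<Delta> = int (c u v) + n_w d w u v * (\<Delta> + \<Delta>0)" for u v
    by (simp add: ic algebra_simps)
  show s: "shift d w c' \<Delta> = shift d w c (\<Delta> + \<Delta>0)"
    by (rule ext, rule ext) (simp add: shift_def e)
  show "\<Delta> \<in> Dset d F G0 c' w \<longleftrightarrow> \<Delta> + \<Delta>0 \<in> Dset d F G0 c w"
    unfolding Dset_def by (simp add: e s)
qed

lemma Den_translate:
  assumes nn: "\<forall>u v. 0 \<le> int (c u v) + n_w d w u v * \<Delta>0"
  and c': "c' = shift d w c \<Delta>0"
  shows "Den d F G0 c' w = Den d F G0 c w"
proof -
  have b: "bij_betw (\<lambda>\<Delta>. \<Delta> + \<Delta>0) (Dset d F G0 c' w) (Dset d F G0 c w)"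
  proof (rule bij_betwI[where g="\<lambda>\<Delta>. \<Delta> - \<Delta>0"])
    show "(\<lambda>\<Delta>. \<Delta> + \<Delta>0) \<in> Dset d F G0 c' w \<rightarrow> Dset d F G0 c w"
      using Dset_translate(1)[OF nn c'] by auto
    show "(\<lambda>\<Delta>. \<Delta> - \<Delta>0) \<in> Dset d F G0 c w \<rightarrow> Dset d F G0 c' w"
      using Dset_translate(1)[OF nn c'] by auto
  qed auto
  have "Den d F G0 c' w = (\<Sum>\<^sub>\<infinity>\<Delta>\<in>Dset d F G0 c' w. ennreal (Vprob d F (shift d w c (\<Delta> + \<Delta>0)) w))"
    unfolding Den_def by (simp add: Dset_translate(2)[OF nn c'])
  also have "\<dots> = Den d F G0 c w"
    unfolding Den_def by (rule infsum_reindex_bij_betw[OF b, where f="\<lambda>\<Delta>. ennreal (Vprob d F (shift d w c \<Delta>) w)"])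
  finally show ?thesis .
qed

lemma Aset_sym_mem:
  assumes cS: "c \<in> graph_space d F G0" and D: "\<Delta> \<in> Aset d F G0 c c' w"
  shows "- \<Delta> \<in> Aset d F G0 c' c w"
proof -
  have nn: "\<forall>u v. 0 \<le> int (c u v) + n_w d w u v * \<Delta>" and c': "c' = shift d w c \<Delta>"
    using D by (auto simp: Aset_def Dset_def)
  have "- \<Delta> \<in> Dset d F G0 c' w" using Dset_translate(1)[OF nn c', of "-\<Delta>"] 
    apply simp unfolding Dset_def using cS
    by (auto simp: shift_def fun_eq_iff)
  moreover have "shift d w c' (- \<Delta>) = c" using Dset_translate(2)[OF nn c', of "-\<Delta>"]
    by (auto simp: shift_def fun_eq_iff)
  ultimately show ?thesis by (simp add: Aset_def)
qed

lemma Aset_card_sym: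
  assumes "c \<in> graph_space d F G0" "c' \<in> graph_space d F G0"
  shows "card (Aset d F G0 c c' w) = card (Aset d F G0 c' c w)"
proof (rule bij_betw_same_card[where f=uminus], rule bij_betwI[where g=uminus])
  show "uminus \<in> Aset d F G0 c c' w \<rightarrow> Aset d F G0 c' c w" using Aset_sym_mem assms by blast
  show "uminus \<in> Aset d F G0 c' c w \<rightarrow> Aset d F G0 c c' w" using Aset_sym_mem assms by blast
qed auto

lemma Yf_sym:
  assumes "c \<in> graph_space d F G0" "c' \<in> graph_space d F G0"
  shows "Yf d F G0 c c' w = Yf d F G0 c' c w"
proof (cases "Aset d F G0 c c' w = {}")
  case True
  then have "Aset d F G0 c' c w = {}" using Aset_sym_mem[OF assms(2)] by blast
  then show ?thesis using True by (simp add: Yf_def)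
next
  case False
  then obtain \<Delta> where D: "\<Delta> \<in> Aset d F G0 c c' w" by blast
  have nn: "\<forall>u v. 0 \<le> int (c u v) + n_w d w u v * \<Delta>" and c': "c' = shift d w c \<Delta>"
    using D by (auto simp: Aset_def Dset_def)
  show ?thesis unfolding Yf_def using Den_translate[OF nn c'] Aset_card_sym[OF assms] by simp
qed

lemma Dset_wrev:
  assumes "even (length w)" "2 \<le> length w"
  shows "\<Delta> \<in> Dset d F G0 c (wrev w) \<longleftrightarrow> - \<Delta> \<in> Dset d F G0 c w"
    and "shift d (wrev w) c \<Delta> = shift d w c (- \<Delta>)"
  by (auto simp: Dset_def shift_def n_w_wrev[OF assms])

lemma Den_wrev:
  assumes "even (length w)" "2 \<le> length w"
  shows "Den d F G0 c (wrev w) = Den d F G0 c w"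
proof -
  have ne: "w \<noteq> []" using assms by auto
  have b: "bij_betw uminus (Dset d F G0 c (wrev w)) (Dset d F G0 c w)"
    by (rule bij_betwI[where g=uminus]) (auto simp: Dset_wrev[OF assms])
  have "Den d F G0 c (wrev w) = (\<Sum>\<^sub>\<infinity>\<Delta>\<in>Dset d F G0 c (wrev w). ennreal (Vprob d F (shift d w c (-\<Delta>)) w))"
    unfolding Den_def by (simp add: Dset_wrev[OF assms] Vprob_wrev[OF ne])
  also have "\<dots> = Den d F G0 c w"
    unfolding Den_def by (rule infsum_reindex_bij_betw[OF b, where f="\<lambda>\<Delta>. ennreal (Vprob d F (shift d w c \<Delta>) w)"])
  finally show ?thesis .
qed

lemma Aset_card_wrev:
  assumes "even (length w)" "2 \<le> length w"
  shows "card (Aset d F G0 c c' (wrev w)) = card (Aset d F G0 c c' w)"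
  by (rule bij_betw_same_card[where f=uminus], rule bij_betwI[where g=uminus])
     (auto simp: Aset_def Dset_wrev[OF assms])

lemma Yf_wrev:
  assumes "even (length w)" "2 \<le> length w"
  shows "Yf d F G0 c c' (wrev w) = Yf d F G0 c c' w"
  unfolding Yf_def using Den_wrev[OF assms] Aset_card_wrev[OF assms] by simp

lemma Aset_finite:
  assumes "c \<noteq> c'"
  shows "finite (Aset d F G0 c c' w)"
proof -
  have "\<Delta>1 = \<Delta>2" if "\<Delta>1 \<in> Aset d F G0 c c' w" "\<Delta>2 \<in> Aset d F G0 c c' w" for \<Delta>1 \<Delta>2
  proof -
    have nn1: "\<forall>u v. 0 \<le> int (c u v) + n_w d w u v * \<Delta>1" and e1: "shift d w c \<Delta>1 = c'"
     and nn2: "\<forall>u v. 0 \<le> int (c u v) + n_w d w u v * \<Delta>2" and e2: "shift d w c \<Delta>2 = c'"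
      using that by (auto simp: Aset_def Dset_def)
    obtain u v where nz: "n_w d w u v \<noteq> 0"
    proof (rule ccontr)
      assume "\<not> thesis"
      then have "\<forall>u v. n_w d w u v = 0" using that by blast
      then have "shift d w c \<Delta>1 = c" by (auto simp: shift_def fun_eq_iff)
      then show False using e1 assms by simp
    qed
    have "int (c u v) + n_w d w u v * \<Delta>1 = int (c u v) + n_w d w u v * \<Delta>2"
      using shift_int[of c u v d w \<Delta>1] shift_int[of c u v d w \<Delta>2] nn1 nn2 e1 e2 by metis
    then show ?thesis using nz by simp
  qed
  then have "Aset d F G0 c c' w \<subseteq> {SOME x. x \<in> Aset d F G0 c c' w}"
    by (metis (mono_tags, lifting) singletonI someI subsetI)
  then show ?thesis using finite_subset by blast
qed


definition Tf where
  "Tf d F G0 c c' w = ennreal (sel_prob d F c w) * ennreal (sel_prob d F c' w) * Yf d F G0 c c' w"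

definition Rf where
  "Rf d F G0 c c' w = ennreal (sel_prob d F c w) *
      (if wrev w \<noteq> w then ennreal (sel_prob d F c' (wrev w)) else 0) * Yf d F G0 c c' w"

lemma move_term:
  assumes "c \<noteq> c'"
  shows "ennreal (sel_prob d F c w) *
        (\<Sum>\<^sub>\<infinity>\<Delta>\<in>{\<Delta> \<in> Dset d F G0 c w. shift d w c \<Delta> = c'}. ennreal (Vprob d F (shift d w c \<Delta>) w)) /
        (\<Sum>\<^sub>\<infinity>\<Delta>\<in>Dset d F G0 c w. ennreal (Vprob d F (shift d w c \<Delta>) w))
       = Tf d F G0 c c' w + Rf d F G0 c c' w"
proof -
  have fin: "finite (Aset d F G0 c c' w)" using Aset_finite[OF assms] .
  have "(\<Sum>\<^sub>\<infinity>\<Delta>\<in>{\<Delta> \<in> Dset d F G0 c w. shift d w c \<Delta> = c'}. ennreal (Vprob d F (shift d w c \<Delta>) w))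
      = (\<Sum>\<Delta>\<in>Aset d F G0 c c' w. ennreal (Vprob d F c' w))"
    using fin by (simp add: Aset_def)
  also have "\<dots> = of_nat (card (Aset d F G0 c c' w)) * ennreal (Vprob d F c' w)" by simp
  finally have i: "(\<Sum>\<^sub>\<infinity>\<Delta>\<in>{\<Delta> \<in> Dset d F G0 c w. shift d w c \<Delta> = c'}. ennreal (Vprob d F (shift d w c \<Delta>) w))
      = of_nat (card (Aset d F G0 c c' w)) * ennreal (Vprob d F c' w)" .
  have v: "ennreal (Vprob d F c' w) = ennreal (sel_prob d F c' w) +
      (if wrev w \<noteq> w then ennreal (sel_prob d F c' (wrev w)) else 0)"
    by (simp add: Vprob_eq ennreal_plus sel_prob_nonneg)
  have "ennreal (sel_prob d F c w) * (of_nat (card (Aset d F G0 c c' w)) * ennreal (Vprob d F c' w)) / Den d F G0 c w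
      = ennreal (sel_prob d F c w) * ennreal (Vprob d F c' w) * Yf d F G0 c c' w"
    unfolding Yf_def by (simp add: ennreal_times_divide mult.assoc mult.left_commute mult.commute)
  also have "\<dots> = Tf d F G0 c c' w + Rf d F G0 c c' w"
    unfolding Tf_def Rf_def v by (simp add: distrib_left distrib_right)
  finally show ?thesis using i by (simp add: Den_def)
qed

lemma move_prob_eq:
  assumes "c \<noteq> c'"
  shows "move_prob d F G0 c c' = (\<Sum>\<^sub>\<infinity>w. Tf d F G0 c c' w) + (\<Sum>\<^sub>\<infinity>w. Rf d F G0 c c' w)"
  unfolding move_prob_def move_term[OF assms]
  by (rule infsum_add) (rule nonneg_summable_on_complete, simp)+

definition Ew :: "'v list set" where "Ew = {w. even (length w) \<and> 2 \<le> length w}"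

lemma Rf_sym:
  fixes c :: "'v::finite wgraph"
  assumes "c \<in> graph_space d F G0" "c' \<in> graph_space d F G0"
  shows "(\<Sum>\<^sub>\<infinity>w. Rf d F G0 c c' w) = (\<Sum>\<^sub>\<infinity>w. Rf d F G0 c' c w)"
proof -
  have z: "Rf d F G0 a b w = 0" if "w \<notin> Ew" for a b w
  proof -
    have "sel_prob d F a w = 0" using sel_prob_E that by (auto simp: Ew_def)
    then show ?thesis by (simp add: Rf_def)
  qed
  have "(\<Sum>\<^sub>\<infinity>w. Rf d F G0 c c' w) = (\<Sum>\<^sub>\<infinity>w\<in>Ew. Rf d F G0 c c' w)"
    by (rule infsum_cong_neutral) (auto simp: z)
  also have "\<dots> = (\<Sum>\<^sub>\<infinity>w\<in>Ew. Rf d F G0 c c' (wrev w))"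
  proof (rule infsum_reindex_bij_betw[symmetric])
    show "bij_betw wrev Ew Ew"
      by (rule bij_betwI[where g=wrev]) (auto simp: Ew_def, (subst wrev_length; auto)+, (subst wrev_wrev; auto)+)
  qed
  also have "\<dots> = (\<Sum>\<^sub>\<infinity>w\<in>Ew. Rf d F G0 c' c w)"
  proof (rule infsum_cong)
    fix w :: "'v list" assume w: "w \<in> Ew"
    then have ne: "w \<noteq> []" and e: "even (length w)" "2 \<le> length w" by (auto simp: Ew_def)
    show "Rf d F G0 c c' (wrev w) = Rf d F G0 c' c w"
      unfolding Rf_def wrev_wrev[OF ne] Yf_wrev[OF e] Yf_sym[OF assms]
      by (auto simp: mult.commute)
  qed
  also have "\<dots> = (\<Sum>\<^sub>\<infinity>w. Rf d F G0 c' c w)"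
    by (rule infsum_cong_neutral) (auto simp: z)
  finally show ?thesis .
qed

lemma move_prob_sym:
  assumes "c \<in> graph_space d F G0" "c' \<in> graph_space d F G0"
  shows "move_prob d F G0 c c' = move_prob d F G0 c' c"
proof (cases "c = c'")
  case True then show ?thesis by simp
next
  case False
  have "(\<Sum>\<^sub>\<infinity>w. Tf d F G0 c c' w) = (\<Sum>\<^sub>\<infinity>w. Tf d F G0 c' c w)"
    unfolding Tf_def Yf_sym[OF assms] by (simp add: mult.commute)
  then show ?thesis using move_prob_eq[OF False] move_prob_eq[of c' c] False Rf_sym[OF assms] by simp
qed

lemma wgs_trans_sym:
  assumes "c \<in> graph_space d F G0" "c' \<in> graph_space d F G0"
  shows "wgs_trans d F G0 c c' = wgs_trans d F G0 c' c"
  unfolding wgs_trans_def using move_prob_sym[OF assms] by auto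


definition Df :: "'v wgraph \<Rightarrow> 'v wgraph \<Rightarrow> 'v \<Rightarrow> 'v \<Rightarrow> int" where
  "Df G' G u v = int (G' u v) - int (G u v)"

definition Sout :: "bool \<Rightarrow> ('v::finite \<Rightarrow> 'v \<Rightarrow> int) \<Rightarrow> 'v \<Rightarrow> int" where
  "Sout d f x = (if d then (\<Sum>v\<in>UNIV. f x v) else (\<Sum>v\<in>UNIV. f x v) + f x x)"

definition Sin :: "bool \<Rightarrow> ('v::finite \<Rightarrow> 'v \<Rightarrow> int) \<Rightarrow> 'v \<Rightarrow> int" where
  "Sin d f x = (if d then (\<Sum>v\<in>UNIV. f v x) else (\<Sum>v\<in>UNIV. f x v) + f x x)"

definition cnt :: "bool \<Rightarrow> ('v \<times> 'v) list \<Rightarrow> 'v \<Rightarrow> 'v \<Rightarrow> nat" where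
  "cnt d L u v = length (filter (is_edge d u v) L)"

definition fc :: "('v \<times> 'v) list \<Rightarrow> 'v \<Rightarrow> int" where
  "fc L x = int (length (filter (\<lambda>q. fst q = x) L))"

definition sc :: "('v \<times> 'v) list \<Rightarrow> 'v \<Rightarrow> int" where
  "sc L x = int (length (filter (\<lambda>q. snd q = x) L))"

lemma Sout_add: "Sout d (\<lambda>u v. f u v + g u v) x = Sout d f x + Sout d g x"
  by (simp add: Sout_def sum.distrib)
lemma Sin_add: "Sin d (\<lambda>u v. f u v + g u v) x = Sin d f x + Sin d g x"
  by (simp add: Sin_def sum.distrib)
lemma Sout_diff: "Sout d (\<lambda>u v. f u v - g u v) x = Sout d f x - Sout d g x"
  by (simp add: Sout_def sum_subtractf)
lemma Sin_diff: "Sin d (\<lambda>u v. f u v - g u v) x = Sin d f x - Sin d g x"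
  by (simp add: Sin_def sum_subtractf)
lemma Sout_zero: "Sout d (\<lambda>u v. 0) x = 0"
  by (simp add: Sout_def)
lemma Sin_zero: "Sin d (\<lambda>u v. 0) x = 0"
  by (simp add: Sin_def)

lemma Sout_mono: "(\<And>u v. f u v \<le> g u v) \<Longrightarrow> Sout d f x \<le> Sout d g x"
  by (auto simp: Sout_def intro!: sum_mono add_mono)
lemma Sin_mono: "(\<And>u v. f u v \<le> g u v) \<Longrightarrow> Sin d f x \<le> Sin d g x"
  by (auto simp: Sin_def intro!: sum_mono add_mono)

lemma Sout_less_ex:
  assumes "Sout d f x < Sout d g x" shows "\<exists>v. f x v < g x v"
proof (rule ccontr)
  assume "\<not> ?thesis"
  then have "\<And>v. g x v \<le> f x v" by (meson not_less)
  then have "Sout d g x \<le> Sout d f x" by (auto simp: Sout_def intro!: sum_mono add_mono)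
  then show False using assms by simp
qed

lemma Sin_less_ex:
  assumes "Sin d f x < Sin d g x"
    and "\<not> d \<Longrightarrow> \<forall>u v. f u v = f v u \<and> g u v = g v u"
  shows "\<exists>v. f v x < g v x"
proof (rule ccontr)
  assume "\<not> ?thesis"
  then have h: "\<And>v. g v x \<le> f v x" by (meson not_less)
  have "Sin d g x \<le> Sin d f x"
  proof (cases d)
    case True then show ?thesis using h by (auto simp: Sin_def intro!: sum_mono)
  next
    case False
    then have "\<And>v. g x v \<le> f x v" using h assms(2) by metis
    then show ?thesis using False by (auto simp: Sin_def intro!: sum_mono add_mono)
  qed
  then show False using assms by simp
qed

lemma Sout_zero_nonneg:
  assumes "Sout d f x = 0" "\<And>u v. 0 \<le> f u v" shows "f x v = 0"
proof -
  have s: "(\<Sum>v\<in>UNIV. f x v) = 0"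
  proof (cases d)
    case True then show ?thesis using assms by (simp add: Sout_def)
  next
    case False
    have "0 \<le> (\<Sum>v\<in>UNIV. f x v)" using assms(2) by (simp add: sum_nonneg)
    then show ?thesis using False assms by (simp add: Sout_def) (smt (verit))
  qed
  show ?thesis using sum_nonneg_eq_0_iff[of UNIV "f x"] s assms(2) by simp
qed

lemma is_edge_sum_out:
  "Sout d (\<lambda>u v. if is_edge d u v q then 1 else 0) x =
     (if fst q = x then 1 else 0) + (if d then 0 else (if snd q = x then 1 else 0))"
proof -
  obtain a b where q: "q = (a, b)" by (cases q)
  show ?thesis
  proof (cases d)
    case True
    have "(\<Sum>v\<in>UNIV. if q = (x, v) then 1 else 0 :: int) = (\<Sum>v\<in>{v. q = (x,v)}. 1)"
      by (simp add: sum.If_cases)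
    also have "{v. q = (x,v)} = (if a = x then {b} else {})" using q by auto
    finally show ?thesis using True q by (simp add: Sout_def is_edge_def)
  next
    case False
    have "(\<Sum>v\<in>UNIV. if q = (x, v) \<or> q = (v, x) then 1 else 0 :: int) = (\<Sum>v\<in>{v. q = (x,v) \<or> q = (v,x)}. 1)"
      by (simp add: sum.If_cases)
    also have "{v. q = (x,v) \<or> q = (v,x)} = (if a = x then {b} else {}) \<union> (if b = x then {a} else {})"
      using q by auto
    finally show ?thesis using False q by (auto simp: Sout_def is_edge_def)
  qed
qed

lemma is_edge_sum_in:
  "Sin d (\<lambda>u v. if is_edge d u v q then 1 else 0) x =
     (if snd q = x then 1 else 0) + (if d then 0 else (if fst q = x then 1 else 0))"
proof (cases d)
  case True
  obtain a b where q: "q = (a, b)" by (cases q)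
  have "(\<Sum>v\<in>UNIV. if q = (v, x) then 1 else 0 :: int) = (\<Sum>v\<in>{v. q = (v,x)}. 1)"
    by (simp add: sum.If_cases)
  also have "{v. q = (v,x)} = (if b = x then {a} else {})" using q by auto
  finally show ?thesis using True q by (simp add: Sin_def is_edge_def)
next
  case False
  then show ?thesis using is_edge_sum_out[of d q x] by (simp add: Sin_def Sout_def)
qed

lemma cnt_Cons: "int (cnt d (q # L) u v) = (if is_edge d u v q then 1 else 0) + int (cnt d L u v)"
  by (simp add: cnt_def)

lemma cnt_append: "cnt d (L1 @ L2) u v = cnt d L1 u v + cnt d L2 u v"
  by (simp add: cnt_def)

lemma cnt_single: "cnt d [q] u v = (if is_edge d u v q then 1 else 0)"
  by (simp add: cnt_def)

lemma cnt_Nil: "cnt d [] u v = 0" by (simp add: cnt_def)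

lemma fc_Cons: "fc (q # L) x = (if fst q = x then 1 else 0) + fc L x" by (simp add: fc_def)
lemma sc_Cons: "sc (q # L) x = (if snd q = x then 1 else 0) + sc L x" by (simp add: sc_def)
lemma fc_append: "fc (L1 @ L2) x = fc L1 x + fc L2 x" by (simp add: fc_def)
lemma sc_append: "sc (L1 @ L2) x = sc L1 x + sc L2 x" by (simp add: sc_def)
lemma fc_single: "fc [q] x = (if fst q = x then 1 else 0)" by (simp add: fc_def)
lemma sc_single: "sc [q] x = (if snd q = x then 1 else 0)" by (simp add: sc_def)

lemma Sout_cnt: "Sout d (\<lambda>u v. int (cnt d L u v)) x = fc L x + (if d then 0 else sc L x)"
proof (induction L)
  case Nil then show ?case by (simp add: cnt_def fc_def sc_def Sout_def)
next
  case (Cons q L)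
  have "Sout d (\<lambda>u v. int (cnt d (q # L) u v)) x =
        Sout d (\<lambda>u v. (if is_edge d u v q then 1 else 0) + int (cnt d L u v)) x"
    by (simp add: cnt_Cons)
  also have "\<dots> = Sout d (\<lambda>u v. if is_edge d u v q then 1 else 0) x + Sout d (\<lambda>u v. int (cnt d L u v)) x"
    by (rule Sout_add)
  finally show ?case using Cons by (simp add: is_edge_sum_out fc_Cons sc_Cons)
qed

lemma Sin_cnt: "Sin d (\<lambda>u v. int (cnt d L u v)) x = sc L x + (if d then 0 else fc L x)"
proof (induction L)
  case Nil then show ?case by (simp add: cnt_def fc_def sc_def Sin_def)
next
  case (Cons q L)
  have "Sin d (\<lambda>u v. int (cnt d (q # L) u v)) x =
        Sin d (\<lambda>u v. (if is_edge d u v q then 1 else 0) + int (cnt d L u v)) x"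
    by (simp add: cnt_Cons)
  also have "\<dots> = Sin d (\<lambda>u v. if is_edge d u v q then 1 else 0) x + Sin d (\<lambda>u v. int (cnt d L u v)) x"
    by (rule Sin_add)
  finally show ?case using Cons by (simp add: is_edge_sum_in fc_Cons sc_Cons)
qed

lemma is_edge_sym: "\<not> d \<Longrightarrow> is_edge d u v q = is_edge d v u q"
  by (auto simp: is_edge_def)

lemma cnt_sym: "\<not> d \<Longrightarrow> cnt d L u v = cnt d L v u"
proof -
  assume nd: "\<not> d"
  have "is_edge d u v = is_edge d v u" by (rule ext) (use nd in \<open>auto simp: is_edge_def\<close>)
  then show ?thesis by (simp add: cnt_def)
qed

lemma cnt_is_edge: "is_edge d u v q \<Longrightarrow> cnt d L u v = cnt d L (fst q) (snd q)"
  by (cases q) (auto simp: is_edge_def cnt_sym)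

lemma is_edge_self: "is_edge d (fst q) (snd q) q"
  by (simp add: is_edge_def)

lemma cnt_pos_mem: "q \<in> set L \<Longrightarrow> 0 < cnt d L (fst q) (snd q)"
  by (simp add: cnt_def filter_empty_conv is_edge_self) (metis is_edge_self length_greater_0_conv filter_empty_conv)

lemma length_le_sum_cnt: "length L \<le> (\<Sum>u\<in>(UNIV::'v::finite set). \<Sum>v\<in>UNIV. cnt d L u v)"
proof (induction L)
  case Nil then show ?case by simp
next
  case (Cons q L)
  have e: "cnt d (q # L) u v = (if is_edge d u v q then 1 else 0) + cnt d L u v" for u v
    by (simp add: cnt_def)
  have "(1::nat) \<le> (\<Sum>u\<in>(UNIV::'v set). \<Sum>v\<in>UNIV. if is_edge d u v q then 1 else 0)"
  proof -
    have "(1::nat) \<le> (\<Sum>v\<in>UNIV. if is_edge d (fst q) v q then 1 else 0)"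
      using member_le_sum[of "snd q" UNIV "\<lambda>v. if is_edge d (fst q) v q then 1 else (0::nat)"]
      by (simp add: is_edge_self)
    also have "\<dots> \<le> (\<Sum>u\<in>(UNIV::'v set). \<Sum>v\<in>UNIV. if is_edge d u v q then 1 else 0)"
      by (rule member_le_sum) auto
    finally show ?thesis .
  qed
  then show ?case using Cons by (simp add: e sum.distrib)
qed

lemma sum_cl_le2: "(\<Sum>u\<in>(UNIV::'v::finite set). \<Sum>v\<in>UNIV. (if is_edge d u v q then 1 else 0)::int) \<le> 2"
proof -
  obtain a b where q: "q = (a,b)" by (cases q)
  have "(\<Sum>u\<in>(UNIV::'v set). \<Sum>v\<in>UNIV. (if is_edge d u v q then 1 else 0)::int)
      = (\<Sum>uv\<in>UNIV. (if is_edge d (fst uv) (snd uv) q then 1 else 0))"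
    by (simp add: sum.cartesian_product UNIV_Times_UNIV[symmetric] case_prod_beta del: UNIV_Times_UNIV)
  also have "\<dots> = card {uv. is_edge d (fst uv) (snd uv) q}"
    by (simp add: sum.If_cases)
  also have "\<dots> \<le> card {(a,b),(b,a)}"
    by (intro of_nat_mono card_mono) (auto simp: q is_edge_def)
  also have "\<dots> \<le> 2" by (simp add: card_insert_le_m1)
  finally show ?thesis by simp
qed


definition Pp :: "'v list \<Rightarrow> ('v \<times> 'v) list" where
  "Pp w = map (\<lambda>i. (w ! (2 * i + 1), w ! (2 * i + 2))) [0..<(length w - 1) div 2]"

lemma plus_pairs_snoc_even:
  assumes "even (length p)"
  shows "plus_pairs (p @ [a]) = plus_pairs p"
proof -
  have l: "length (p @ [a]) div 2 = length p div 2" using assms by simp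
  show ?thesis unfolding plus_pairs_def l
    by (rule map_cong) (use assms in \<open>auto simp: nth_append\<close>)
qed

lemma plus_pairs_snoc_odd:
  assumes "odd (length p)"
  shows "plus_pairs (p @ [a]) = plus_pairs p @ [(a, p ! (length p - 1))]"
proof -
  have l: "length (p @ [a]) div 2 = Suc (length p div 2)" using assms by simp
  have i: "2 * (length p div 2) + 1 = length p" using assms by simp
  have pos: "0 < length p" using assms by (cases "length p") auto
  show ?thesis unfolding plus_pairs_def l upt_Suc_append[OF le0] map_append
    using assms i pos by (auto simp: nth_append intro!: map_cong)
qed

lemma Pp_snoc_odd:
  assumes "odd (length p)"
  shows "Pp (p @ [a]) = Pp p"
proof -
  have l: "(length (p @ [a]) - 1) div 2 = (length p - 1) div 2" using assms by simp presburger
  show ?thesis unfolding Pp_def l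
    by (rule map_cong) (use assms in \<open>auto simp: nth_append\<close>)
qed

lemma Pp_snoc_even:
  assumes "even (length p)" "2 \<le> length p"
  shows "Pp (p @ [a]) = Pp p @ [(p ! (length p - 1), a)]"
proof -
  have l: "(length (p @ [a]) - 1) div 2 = Suc ((length p - 1) div 2)" using assms by simp presburger
  have i: "2 * ((length p - 1) div 2) + 1 = length p - 1" "2 * ((length p - 1) div 2) + 2 = length p"
    using assms by auto
  show ?thesis unfolding Pp_def l upt_Suc_append[OF le0] map_append
    using assms i by (auto simp: nth_append intro!: map_cong)
qed

lemma minus_pairs_Pp:
  assumes "even (length w)" "2 \<le> length w"
  shows "minus_pairs w = Pp w @ [(w ! (length w - 1), w ! 0)]"
proof -
  define L where "L = length w"
  have l: "L div 2 = Suc ((L - 1) div 2)" using assms L_def by auto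
  have i2: "2 * ((L - 1) div 2) + 2 = L" using assms L_def by presburger
  have i: "2 * ((L - 1) div 2) + 1 = L - 1" "(2 * ((L - 1) div 2) + 2) mod L = 0"
    using i2 by auto
  have m: "(2 * x + 2) mod L = 2 * x + 2" if "x < (L - 1) div 2" for x
    using that assms L_def by auto
  show ?thesis unfolding minus_pairs_def Pp_def L_def[symmetric] l upt_Suc_append[OF le0] map_append
    using i m by auto
qed

lemma step_factor_append:
  assumes "j < length p"
  shows "step_factor d F c (p @ xs) j = step_factor d F c p j"
proof -
  have "j - 1 < length p" "j - 2 < length p" "0 < length p" using assms by auto
  then show ?thesis using assms by (simp add: step_factor_def nth_append)
qed

lemma unif_pick_pos_iff: "0 < unif_pick (A::'v::finite set) x \<longleftrightarrow> x \<in> A"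
proof
  assume "x \<in> A"
  then have "card A > 0" by (simp add: card_gt_0_iff) (auto)
  then show "0 < unif_pick A x" using \<open>x \<in> A\<close> by (simp add: unif_pick_def)
qed (auto simp: unif_pick_def split: if_splits)

lemma step_factor_pos_odd:
  fixes w :: "'v::finite list"
  assumes "odd j"
  shows "0 < step_factor d F c w j \<longleftrightarrow> w ! j \<in> Nbr d F c (w ! (j - 1)) - (if j = 1 then {} else {w ! (j - 2)})"
  using assms by (simp add: step_factor_def unif_pick_pos_iff)

lemma step_factor_pos_even:
  fixes w :: "'v::finite list"
  assumes "even j"
  shows "0 < step_factor d F c w j \<longleftrightarrow> \<not> (w ! 0 \<in> Mset d F (w ! (j - 1)) - {w ! (j - 2)}) \<and>
           w ! j \<in> Mset d F (w ! (j - 1)) - {w ! (j - 2)}"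
  using assms by (simp add: step_factor_def unif_pick_pos_iff)

lemma sel_prob_pos_intro:
  fixes w :: "'v::finite list"
  assumes "even (length w)" "2 \<le> length w"
    and "\<forall>j\<in>{1..<length w}. 0 < step_factor d F c w j"
    and "w ! 0 \<in> Mset d F (w ! (length w - 1)) - {w ! (length w - 2)}"
  shows "0 < sel_prob d F c w"
proof -
  have "0 < step_factor d F c w 1" using assms by auto
  then have "w ! 1 \<in> Nbr d F c (w ! 0)" using step_factor_pos_odd[where j=1 and d=d and F=F and c=c and w=w] by simp
  then have st: "w ! 0 \<in> start_set d F c" by (auto simp: start_set_def)
  have p: "0 < (\<Prod>j\<in>{1..length w - 1}. step_factor d F c w j)"
  proof (rule prod_pos)
    fix j assume "j \<in> {1..length w - 1}"
    then have "j \<in> {1..<length w}" using assms by auto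
    then show "0 < step_factor d F c w j" using assms by auto
  qed
  have k: "length w - 1 - 1 = length w - 2" by simp
  show ?thesis using assms st p
    by (simp add: sel_prob_def Let_def k unif_pick_pos_iff numeral_2_eq_2)
qed

lemma in_F_sym: "\<not> d \<Longrightarrow> in_F d F u v = in_F d F v u"
  by (auto simp: in_F_def)

locale wsetup =
  fixes d :: bool and F :: "('v::finite \<times> 'v) set" and G0 G G' :: "'v wgraph"
  assumes GS: "G \<in> graph_space d F G0" and G'S: "G' \<in> graph_space d F G0"
begin

abbreviation D where "D \<equiv> Df G' G"

lemma G_sym: "\<not> d \<Longrightarrow> G u v = G v u"
  using GS by (auto simp: graph_space_def is_graph_def)
lemma G'_sym: "\<not> d \<Longrightarrow> G' u v = G' v u"
  using G'S by (auto simp: graph_space_def is_graph_def)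
lemma D_eta: "D = (\<lambda>u v. int (G' u v) - int (G u v))"
  by (rule ext)+ (simp add: Df_def)
lemma D_sym: "\<not> d \<Longrightarrow> D u v = D v u"
  using G_sym G'_sym by (simp add: Df_def)
lemma D_F: "in_F d F u v \<Longrightarrow> D u v = 0"
  using GS G'S by (auto simp: graph_space_def Df_def)
lemma D_nz_F: "D u v \<noteq> 0 \<Longrightarrow> \<not> in_F d F u v"
  using D_F by blast
lemma D_is_edge: "is_edge d u v q \<Longrightarrow> D u v = D (fst q) (snd q)"
  by (cases q) (auto simp: is_edge_def D_sym)
lemma D_neg_G: "D u v < 0 \<Longrightarrow> 0 < G u v"
  by (simp add: Df_def)

lemma strength_int:
  assumes "c \<in> graph_space d F G0"
  shows "Sout d (\<lambda>u v. int (c u v)) x = Sout d (\<lambda>u v. int (G0 u v)) x"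
    and "Sin d (\<lambda>u v. int (c u v)) x = Sin d (\<lambda>u v. int (G0 u v)) x"
proof -
  have ss: "same_strengths d G0 c" using assms by (simp add: graph_space_def)
  show "Sout d (\<lambda>u v. int (c u v)) x = Sout d (\<lambda>u v. int (G0 u v)) x"
  proof (cases d)
    case True
    then have "out_strength c x = out_strength G0 x" using ss by (simp add: same_strengths_def)
    then show ?thesis using True by (simp add: Sout_def out_strength_def flip: of_nat_sum)
  next
    case False
    then have "ustrength c x = ustrength G0 x" using ss by (simp add: same_strengths_def)
    then show ?thesis using False by (simp add: Sout_def ustrength_def flip: of_nat_sum)
  qed
  show "Sin d (\<lambda>u v. int (c u v)) x = Sin d (\<lambda>u v. int (G0 u v)) x"
  proof (cases d)
    case True
    then have "in_strength c x = in_strength G0 x" using ss by (simp add: same_strengths_def)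
    then show ?thesis using True by (simp add: Sin_def in_strength_def flip: of_nat_sum)
  next
    case False
    then have "ustrength c x = ustrength G0 x" using ss by (simp add: same_strengths_def)
    then show ?thesis using False by (simp add: Sin_def ustrength_def flip: of_nat_sum)
  qed
qed

lemma Sout_D: "Sout d D x = 0"
  using Sout_diff[of d "\<lambda>u v. int (G' u v)" "\<lambda>u v. int (G u v)" x] strength_int[OF GS] strength_int[OF G'S]
  by (simp add: D_eta)

lemma Sin_D: "Sin d D x = 0"
  using Sin_diff[of d "\<lambda>u v. int (G' u v)" "\<lambda>u v. int (G u v)" x] strength_int[OF GS] strength_int[OF G'S]
  by (simp add: D_eta)

lemma Sout_pos_neg: "Sout d (\<lambda>u v. max 0 (D u v)) x = Sout d (\<lambda>u v. max 0 (- D u v)) x"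
proof -
  have "Sout d (\<lambda>u v. max 0 (D u v) - max 0 (- D u v)) x = Sout d D x"
    by (rule arg_cong[where f="\<lambda>f. Sout d f x"]) (auto simp: fun_eq_iff)
  then show ?thesis using Sout_D Sout_diff[of d "\<lambda>u v. max 0 (D u v)" "\<lambda>u v. max 0 (- D u v)" x] by simp
qed

lemma Sin_pos_neg: "Sin d (\<lambda>u v. max 0 (D u v)) x = Sin d (\<lambda>u v. max 0 (- D u v)) x"
proof -
  have "Sin d (\<lambda>u v. max 0 (D u v) - max 0 (- D u v)) x = Sin d D x"
    by (rule arg_cong[where f="\<lambda>f. Sin d f x"]) (auto simp: fun_eq_iff)
  then show ?thesis using Sin_D Sin_diff[of d "\<lambda>u v. max 0 (D u v)" "\<lambda>u v. max 0 (- D u v)" x] by simp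
qed

definition winv :: "'v list \<Rightarrow> bool" where
 "winv p \<longleftrightarrow> 2 \<le> length p \<and>
   (\<forall>j\<in>{1..<length p}. 0 < step_factor d F G p j) \<and>
   (\<forall>i. 2*i+1 < length p \<longrightarrow> D (p!(2*i+1)) (p!(2*i)) < 0) \<and>
   (\<forall>i. 2*i+2 < length p \<longrightarrow> 0 < D (p!(2*i+1)) (p!(2*i+2))) \<and>
   (\<forall>u v. int (cnt d (plus_pairs p) u v) \<le> max 0 (- D u v)) \<and>
   (\<forall>u v. int (cnt d (Pp p) u v) \<le> max 0 (D u v)) \<and>
   (\<forall>x. if even (length p) then
          fc (plus_pairs p) x - fc (Pp p) x = (if x = last p then 1 else 0) \<and>
          sc (plus_pairs p) x - sc (Pp p) x = (if x = p!0 then 1 else 0)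
        else fc (plus_pairs p) x - fc (Pp p) x = 0 \<and>
          sc (plus_pairs p) x - sc (Pp p) x = (if x = p!0 then 1 else 0) - (if x = last p then 1 else 0)) \<and>
   (\<forall>i. 0 < i \<longrightarrow> 2*i < length p \<longrightarrow> p!(2*i) \<noteq> p!0)"

definition Mclose :: "'v list \<Rightarrow> bool" where
  "Mclose p \<longleftrightarrow> p!0 \<in> Mset d F (last p) - {p!(length p - 2)}"

end


context wsetup
begin

lemma winv_init:
  assumes "D a b < 0"
  shows "winv [b, a]"
proof -
  have pp: "plus_pairs [b, a] = [(a, b)]" by (simp add: plus_pairs_def)
  have P: "Pp [b, a] = []" by (simp add: Pp_def)
  have sf: "0 < step_factor d F G [b, a] 1"
    using assms D_nz_F[of a b] D_neg_G[of a b]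
    by (intro step_factor_pos_odd[THEN iffD2]) (simp_all add: Nbr_def)
  have c: "int (cnt d [(a, b)] u v) \<le> max 0 (- D u v)" for u v
  proof (cases "is_edge d u v (a, b)")
    case True
    then have "D u v = D a b" using D_is_edge by fastforce
    then show ?thesis using True assms by (simp add: cnt_def)
  next
    case False then show ?thesis by (simp add: cnt_def)
  qed
  have "\<forall>j\<in>{1..<2}. 0 < step_factor d F G [b, a] j"
  proof
    fix j assume "j \<in> {1..<(2::nat)}" then have "j = 1" by auto
    then show "0 < step_factor d F G [b, a] j" using sf by simp
  qed
  moreover have "\<forall>i. 2*i+1 < 2 \<longrightarrow> D ([b,a]!(2*i+1)) ([b,a]!(2*i)) < 0" using assms by auto
  moreover have "\<forall>i. 0 < i \<longrightarrow> 2*i < 2 \<longrightarrow> [b,a]!(2*i) \<noteq> [b,a]!0" by auto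
  ultimately show ?thesis unfolding winv_def using c
    by (simp add: pp P fc_def sc_def cnt_def)
qed

lemma winv_len_bound:
  assumes "winv p"
  shows "length p \<le> 2 * (\<Sum>u\<in>UNIV. \<Sum>v\<in>UNIV. nat (max 0 (- D u v))) + 1"
proof -
  have "length p div 2 = length (plus_pairs p)" by (simp add: plus_pairs_def)
  also have "\<dots> \<le> (\<Sum>u\<in>UNIV. \<Sum>v\<in>UNIV. cnt d (plus_pairs p) u v)" by (rule length_le_sum_cnt)
  also have "\<dots> \<le> (\<Sum>u\<in>UNIV. \<Sum>v\<in>UNIV. nat (max 0 (- D u v)))"
  proof (intro sum_mono)
    fix u v
    have "int (cnt d (plus_pairs p) u v) \<le> max 0 (- D u v)" using assms by (simp add: winv_def)
    then show "cnt d (plus_pairs p) u v \<le> nat (max 0 (- D u v))" by linarith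
  qed
  finally show ?thesis by linarith
qed

lemma winv_extend_even:
  assumes inv: "winv p" and ev: "even (length p)" and nc: "\<not> Mclose p"
  shows "\<exists>v. winv (p @ [v])"
proof -
  define m where "m = length p - 1"
  define u where "u = last p"
  have len: "2 \<le> length p" using inv by (simp add: winv_def)
  have m: "odd m" "m < length p" "1 \<le> m" "length p = m + 1" using ev len m_def by auto
  have pne: "p \<noteq> []" using len by auto
  have u: "u = p ! m" using pne by (simp add: u_def m_def last_conv_nth)
  have bal: "fc (plus_pairs p) x - fc (Pp p) x = (if x = last p then 1 else 0) \<and>
          sc (plus_pairs p) x - sc (Pp p) x = (if x = p!0 then 1 else 0)" for x
    using inv ev unfolding winv_def by meson
  have cN: "int (cnt d (plus_pairs p) a b) \<le> max 0 (- D a b)" for a b using inv by (simp add: winv_def)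
  have cP: "int (cnt d (Pp p) a b) \<le> max 0 (D a b)" for a b using inv by (simp add: winv_def)
  have "Sout d (\<lambda>a b. int (cnt d (Pp p) a b)) u < Sout d (\<lambda>a b. int (cnt d (plus_pairs p) a b)) u"
    using bal[of u] unfolding Sout_cnt by (auto simp: u_def split: if_splits)
  also have "\<dots> \<le> Sout d (\<lambda>a b. max 0 (- D a b)) u" by (rule Sout_mono) (use cN in auto)
  also have "\<dots> = Sout d (\<lambda>a b. max 0 (D a b)) u" using Sout_pos_neg by simp
  finally obtain v where v: "int (cnt d (Pp p) u v) < max 0 (D u v)" using Sout_less_ex by blast
  have Dv: "0 < D u v" using v by linarith
  have i3: "\<forall>i. 2*i+1 < length p \<longrightarrow> D (p!(2*i+1)) (p!(2*i)) < 0" using inv by (simp add: winv_def)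
  have Dm1: "D u (p ! (m - 1)) < 0" using i3[rule_format, of "(m-1) div 2"] m u by simp
  have vne: "v \<noteq> p ! (m - 1)" using Dv Dm1 by auto
  have vM: "v \<in> Mset d F u" using D_nz_F[of u v] Dv by (simp add: Mset_def)
  have ncl: "\<not> (p ! 0 \<in> Mset d F u - {p ! (m - 1)})"
    using nc by (simp add: Mclose_def u_def m_def numeral_2_eq_2)
  define p' where "p' = p @ [v]"
  have n0: "p' ! 0 = p ! 0" using pne by (simp add: p'_def nth_append)
  have nj: "p' ! j = p ! j" if "j < length p" for j using that by (simp add: p'_def nth_append)
  have nl: "p' ! length p = v" by (simp add: p'_def)
  have lp': "length p' = length p + 1" by (simp add: p'_def)
  have sf: "\<forall>j\<in>{1..<length p'}. 0 < step_factor d F G p' j"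
  proof
    fix j assume j: "j \<in> {1..<length p'}"
    show "0 < step_factor d F G p' j"
    proof (cases "j < length p")
      case True
      then show ?thesis using inv j step_factor_append[OF True] by (auto simp: winv_def p'_def)
    next
      case False
      then have jj: "j = m + 1" using j lp' m by auto
      have "even j" using jj m by simp
      moreover have "p' ! (j - 1) = u" "p' ! (j - 2) = p ! (m - 1)" "p' ! j = v"
        using jj m u nj nl by auto
      ultimately show ?thesis using step_factor_pos_even[of j d F G p'] n0 ncl vM vne by simp
    qed
  qed
  have i3': "\<forall>i. 2*i+1 < length p' \<longrightarrow> D (p'!(2*i+1)) (p'!(2*i)) < 0"
  proof (intro allI impI)
    fix i assume "2*i+1 < length p'"
    then have "2*i+1 < length p" using lp' ev by presburger
    then show "D (p'!(2*i+1)) (p'!(2*i)) < 0" using i3 nj by simp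
  qed
  have i4: "\<forall>i. 2*i+2 < length p \<longrightarrow> 0 < D (p!(2*i+1)) (p!(2*i+2))" using inv by (simp add: winv_def)
  have i4': "\<forall>i. 2*i+2 < length p' \<longrightarrow> 0 < D (p'!(2*i+1)) (p'!(2*i+2))"
  proof (intro allI impI)
    fix i assume h: "2*i+2 < length p'"
    show "0 < D (p'!(2*i+1)) (p'!(2*i+2))"
    proof (cases "2*i+2 < length p")
      case True then show ?thesis using i4 nj by simp
    next
      case False
      then have "2*i+2 = length p" using h lp' by simp
      then have "2*i+1 = m" "2*i+2 = length p" using m by auto
      then show ?thesis using Dv nj nl u m by simp
    qed
  qed
  have ppe: "plus_pairs p' = plus_pairs p" using ev by (simp add: p'_def plus_pairs_snoc_even)
  have Ppe: "Pp p' = Pp p @ [(u, v)]" using ev len Pp_snoc_even[OF ev len, of v]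
    by (simp add: p'_def u m_def)
  have cP': "int (cnt d (Pp p') a b) \<le> max 0 (D a b)" for a b
  proof (cases "is_edge d a b (u, v)")
    case True
    have "cnt d (Pp p) a b = cnt d (Pp p) u v" using cnt_is_edge[OF True] by simp
    moreover have "D a b = D u v" using D_is_edge[OF True] by simp
    ultimately show ?thesis using True v by (simp add: Ppe cnt_append cnt_single)
  next
    case False then show ?thesis using cP[of a b] by (simp add: Ppe cnt_append cnt_single)
  qed
  have odd': "\<not> even (length p')" using lp' ev by simp
  have last': "last p' = v" by (simp add: p'_def)
  have bal': "fc (plus_pairs p') x - fc (Pp p') x = 0 \<and>
          sc (plus_pairs p') x - sc (Pp p') x = (if x = p'!0 then 1 else 0) - (if x = last p' then 1 else 0)" for x
  proof -
    have f: "fc (plus_pairs p') x - fc (Pp p') x = (fc (plus_pairs p) x - fc (Pp p) x) - (if u = x then 1 else 0)"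
      by (simp add: ppe Ppe fc_append fc_single)
    have s: "sc (plus_pairs p') x - sc (Pp p') x = (sc (plus_pairs p) x - sc (Pp p) x) - (if v = x then 1 else 0)"
      by (simp add: ppe Ppe sc_append sc_single)
    have b1: "fc (plus_pairs p) x - fc (Pp p) x = (if x = u then 1 else 0)" using bal[of x] u_def by simp
    have b2: "sc (plus_pairs p) x - sc (Pp p) x = (if x = p'!0 then 1 else 0)" using bal[of x] n0 by simp
    show ?thesis unfolding f s b1 b2 last' by auto
  qed
  have i7: "\<forall>i. 0 < i \<longrightarrow> 2*i < length p \<longrightarrow> p!(2*i) \<noteq> p!0" using inv by (simp add: winv_def)
  have vp0: "v \<noteq> p ! 0"
  proof
    assume vp: "v = p ! 0"
    have "p ! 0 \<in> Mset d F u" using vM vp by simp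
    then have e: "p ! 0 = p ! (m - 1)" using ncl by blast
    show False
    proof (cases "m - 1 = 0")
      case True then show False using vne vp by simp
    next
      case False
      then have "0 < (m - 1) div 2" "2 * ((m - 1) div 2) < length p" "2 * ((m - 1) div 2) = m - 1" using m by presburger+
      then show False using i7 e by metis
    qed
  qed
  have i7': "\<forall>i. 0 < i \<longrightarrow> 2*i < length p' \<longrightarrow> p'!(2*i) \<noteq> p'!0"
  proof (intro allI impI)
    fix i assume h: "0 < i" "2*i < length p'"
    show "p'!(2*i) \<noteq> p'!0"
    proof (cases "2*i < length p")
      case True then show ?thesis using i7 h nj n0 by simp
    next
      case False
      then have "2*i = length p" using h lp' by simp
      then show ?thesis using vp0 nl n0 by simp
    qed
  qed
  have c1: "2 \<le> length p'" using lp' len by simp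
  have c5: "\<forall>a b. int (cnt d (plus_pairs p') a b) \<le> max 0 (- D a b)" using cN ppe by simp
  have c6: "\<forall>a b. int (cnt d (Pp p') a b) \<le> max 0 (D a b)" using cP' by blast
  have c7: "\<forall>x. if even (length p') then
          fc (plus_pairs p') x - fc (Pp p') x = (if x = last p' then 1 else 0) \<and>
          sc (plus_pairs p') x - sc (Pp p') x = (if x = p'!0 then 1 else 0)
        else fc (plus_pairs p') x - fc (Pp p') x = 0 \<and>
          sc (plus_pairs p') x - sc (Pp p') x = (if x = p'!0 then 1 else 0) - (if x = last p' then 1 else 0)"
    using bal' odd' by simp
  have "winv p'"
    unfolding winv_def by (intro conjI c1 sf i3' i4' c5 c6 c7 i7')
  then show ?thesis unfolding p'_def by blast
qed

lemma winv_extend_odd: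
  assumes inv: "winv p" and od: "odd (length p)"
  shows "\<exists>v. winv (p @ [v])"
proof -
  define m where "m = length p - 1"
  define u where "u = last p"
  have len: "2 \<le> length p" using inv by (simp add: winv_def)
  have pne: "p \<noteq> []" using len by auto
  have m: "even m" "m < length p" "2 \<le> m" "length p = m + 1" using od len m_def by (auto; presburger)+
  have u: "u = p ! m" using pne by (simp add: u_def m_def last_conv_nth)
  have bal: "fc (plus_pairs p) x - fc (Pp p) x = 0 \<and>
          sc (plus_pairs p) x - sc (Pp p) x = (if x = p!0 then 1 else 0) - (if x = last p then 1 else 0)" for x
    using inv od unfolding winv_def by meson
  have cN: "int (cnt d (plus_pairs p) a b) \<le> max 0 (- D a b)" for a b using inv by (simp add: winv_def)
  have cP: "int (cnt d (Pp p) a b) \<le> max 0 (D a b)" for a b using inv by (simp add: winv_def)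
  have i7: "\<forall>i. 0 < i \<longrightarrow> 2*i < length p \<longrightarrow> p!(2*i) \<noteq> p!0" using inv by (simp add: winv_def)
  have up0: "u \<noteq> p ! 0" using i7[rule_format, of "m div 2"] m u by simp
  have "Sin d (\<lambda>a b. int (cnt d (plus_pairs p) a b)) u < Sin d (\<lambda>a b. int (cnt d (Pp p) a b)) u"
    using bal[of u] up0 unfolding Sin_cnt by (auto simp: u_def split: if_splits)
  also have "\<dots> \<le> Sin d (\<lambda>a b. max 0 (D a b)) u" by (rule Sin_mono) (use cP in auto)
  also have "\<dots> = Sin d (\<lambda>a b. max 0 (- D a b)) u" using Sin_pos_neg by simp
  finally have lt: "Sin d (\<lambda>a b. int (cnt d (plus_pairs p) a b)) u < Sin d (\<lambda>a b. max 0 (- D a b)) u" .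
  have sym: "\<forall>a b. int (cnt d (plus_pairs p) a b) = int (cnt d (plus_pairs p) b a) \<and> max 0 (- D a b) = max 0 (- D b a)"
    if "\<not> d" using cnt_sym[OF that] D_sym[OF that] by metis
  obtain v where v: "int (cnt d (plus_pairs p) v u) < max 0 (- D v u)"
    using Sin_less_ex[OF lt sym] by blast
  have Dv: "D v u < 0" using v by linarith
  have i4: "\<forall>i. 2*i+2 < length p \<longrightarrow> 0 < D (p!(2*i+1)) (p!(2*i+2))" using inv by (simp add: winv_def)
  have mm: "2*(m div 2 - 1) + 2 = m" "2*(m div 2 - 1) + 1 = m - 1" using m by presburger+
  have Dm1: "0 < D (p ! (m - 1)) u" using i4[rule_format, of "m div 2 - 1"] m u mm by simp
  have vne: "v \<noteq> p ! (m - 1)" using Dv Dm1 by auto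
  have vN: "v \<in> Nbr d F G u" using D_nz_F[of v u] Dv D_neg_G[of v u] by (simp add: Nbr_def)
  define p' where "p' = p @ [v]"
  have n0: "p' ! 0 = p ! 0" using pne by (simp add: p'_def nth_append)
  have nj: "p' ! j = p ! j" if "j < length p" for j using that by (simp add: p'_def nth_append)
  have nl: "p' ! length p = v" by (simp add: p'_def)
  have lp': "length p' = length p + 1" by (simp add: p'_def)
  have sf: "\<forall>j\<in>{1..<length p'}. 0 < step_factor d F G p' j"
  proof
    fix j assume j: "j \<in> {1..<length p'}"
    show "0 < step_factor d F G p' j"
    proof (cases "j < length p")
      case True
      then show ?thesis using inv j step_factor_append[OF True] by (auto simp: winv_def p'_def)
    next
      case False
      then have jj: "j = m + 1" using j lp' m by auto
      have "odd j" "j \<noteq> 1" using jj m by auto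
      moreover have "p' ! (j - 1) = u" "p' ! (j - 2) = p ! (m - 1)" "p' ! j = v"
        using jj m u nj nl by auto
      ultimately show ?thesis using step_factor_pos_odd[of j d F G p'] vN vne by simp
    qed
  qed
  have i3: "\<forall>i. 2*i+1 < length p \<longrightarrow> D (p!(2*i+1)) (p!(2*i)) < 0" using inv by (simp add: winv_def)
  have i3': "\<forall>i. 2*i+1 < length p' \<longrightarrow> D (p'!(2*i+1)) (p'!(2*i)) < 0"
  proof (intro allI impI)
    fix i assume h: "2*i+1 < length p'"
    show "D (p'!(2*i+1)) (p'!(2*i)) < 0"
    proof (cases "2*i+1 < length p")
      case True then show ?thesis using i3 nj by simp
    next
      case False
      then have "2*i+1 = length p" "2*i = m" using h lp' m by auto
      then show ?thesis using Dv nj nl u m by simp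
    qed
  qed
  have i4': "\<forall>i. 2*i+2 < length p' \<longrightarrow> 0 < D (p'!(2*i+1)) (p'!(2*i+2))"
  proof (intro allI impI)
    fix i assume "2*i+2 < length p'"
    then have "2*i+2 < length p" using lp' od by presburger
    then show "0 < D (p'!(2*i+1)) (p'!(2*i+2))" using i4 nj by simp
  qed
  have ppe: "plus_pairs p' = plus_pairs p @ [(v, u)]"
    using plus_pairs_snoc_odd[OF od, of v] by (simp add: p'_def u m_def)
  have Ppe: "Pp p' = Pp p" using od by (simp add: p'_def Pp_snoc_odd)
  have cN': "int (cnt d (plus_pairs p') a b) \<le> max 0 (- D a b)" for a b
  proof (cases "is_edge d a b (v, u)")
    case True
    have "cnt d (plus_pairs p) a b = cnt d (plus_pairs p) v u" using cnt_is_edge[OF True] by simp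
    moreover have "D a b = D v u" using D_is_edge[OF True] by simp
    ultimately show ?thesis using True v by (simp add: ppe cnt_append cnt_single)
  next
    case False then show ?thesis using cN[of a b] by (simp add: ppe cnt_append cnt_single)
  qed
  have ev': "even (length p')" using lp' od by simp
  have last': "last p' = v" by (simp add: p'_def)
  have bal': "fc (plus_pairs p') x - fc (Pp p') x = (if x = last p' then 1 else 0) \<and>
          sc (plus_pairs p') x - sc (Pp p') x = (if x = p'!0 then 1 else 0)" for x
  proof -
    have f: "fc (plus_pairs p') x - fc (Pp p') x = (fc (plus_pairs p) x - fc (Pp p) x) + (if v = x then 1 else 0)"
      by (simp add: ppe Ppe fc_append fc_single)
    have s: "sc (plus_pairs p') x - sc (Pp p') x = (sc (plus_pairs p) x - sc (Pp p) x) + (if u = x then 1 else 0)"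
      by (simp add: ppe Ppe sc_append sc_single)
    have b1: "fc (plus_pairs p) x - fc (Pp p) x = 0" using bal[of x] by simp
    have b2: "sc (plus_pairs p) x - sc (Pp p) x = (if x = p'!0 then 1 else 0) - (if x = u then 1 else 0)"
      using bal[of x] n0 u_def by simp
    show ?thesis unfolding f s b1 b2 last' by auto
  qed
  have i7': "\<forall>i. 0 < i \<longrightarrow> 2*i < length p' \<longrightarrow> p'!(2*i) \<noteq> p'!0"
  proof (intro allI impI)
    fix i assume h: "0 < i" "2*i < length p'"
    then have "2*i < length p" using lp' od by presburger
    then show "p'!(2*i) \<noteq> p'!0" using i7 h nj n0 by simp
  qed
  have c1: "2 \<le> length p'" using lp' len by simp
  have c5: "\<forall>a b. int (cnt d (plus_pairs p') a b) \<le> max 0 (- D a b)" using cN' by blast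
  have c6: "\<forall>a b. int (cnt d (Pp p') a b) \<le> max 0 (D a b)" using cP Ppe by simp
  have c7: "\<forall>x. if even (length p') then
          fc (plus_pairs p') x - fc (Pp p') x = (if x = last p' then 1 else 0) \<and>
          sc (plus_pairs p') x - sc (Pp p') x = (if x = p'!0 then 1 else 0)
        else fc (plus_pairs p') x - fc (Pp p') x = 0 \<and>
          sc (plus_pairs p') x - sc (Pp p') x = (if x = p'!0 then 1 else 0) - (if x = last p' then 1 else 0)"
    using bal' ev' by simp
  have "winv p'"
    unfolding winv_def by (intro conjI c1 sf i3' i4' c5 c6 c7 i7')
  then show ?thesis unfolding p'_def by blast
qed

lemma walk_exists:
  assumes "winv p"
  shows "\<exists>w. winv w \<and> even (length w) \<and> Mclose w"
  using assms
proof (induction "2 * (\<Sum>u\<in>UNIV. \<Sum>v\<in>UNIV. nat (max 0 (- D u v))) + 2 - length p" arbitrary: p rule: less_induct)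
  case less
  show ?case
  proof (cases "even (length p) \<and> Mclose p")
    case True then show ?thesis using less by blast
  next
    case False
    then obtain v where v: "winv (p @ [v])"
      using winv_extend_even winv_extend_odd less.prems by blast
    have "length p \<le> 2 * (\<Sum>u\<in>UNIV. \<Sum>v\<in>UNIV. nat (max 0 (- D u v))) + 1"
      using winv_len_bound less.prems by blast
    then show ?thesis using less.hyps[OF _ v] by simp
  qed
qed

end


lemma wrev_sel_pos:
  fixes w :: "'v::finite list" and c H :: "'v wgraph"
  assumes ev: "even (length w)" and len: "4 \<le> length w"
    and sfG: "\<forall>j\<in>{1..<length w}. 0 < step_factor d F c w j"
    and cl: "w!0 \<in> Mset d F (w!(length w - 1)) - {w!(length w - 2)}"
    and i7: "\<forall>i. 0 < i \<longrightarrow> 2*i < length w \<longrightarrow> w!(2*i) \<noteq> w!0"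
    and HP: "\<forall>q\<in>set (minus_pairs w). 0 < H (fst q) (snd q)"
  shows "0 < sel_prob d F H (wrev w)"
proof -
  define L where "L = length w"
  have ne: "w \<noteq> []" using len by auto
  have lx: "length (wrev w) = L" using ne by (simp add: wrev_length L_def)
  have x0: "wrev w ! 0 = w ! 0" using ne by (simp add: wrev_nth0)
  have xj: "wrev w ! j = w ! (L - j)" if "1 \<le> j" "j < L" for j
    using that wrev_nth[of j w] by (simp add: L_def)
  have xj2: "wrev w ! j = w ! k" if "1 \<le> j" "j < L" "L - j = k" for j k
    using xj that by simp
  have W1: "w!j \<in> Nbr d F c (w!(j-1)) - (if j = 1 then {} else {w!(j-2)})" if "odd j" "j < L" for j
  proof -
    have "j \<in> {1..<length w}" using that by (auto simp: L_def elim: oddE)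
    then show ?thesis using sfG step_factor_pos_odd[OF that(1), of d F c w] by auto
  qed
  have W2: "\<not> (w!0 \<in> Mset d F (w!(j-1)) - {w!(j-2)}) \<and> w!j \<in> Mset d F (w!(j-1)) - {w!(j-2)}"
    if "even j" "2 \<le> j" "j < L" for j
  proof -
    have "j \<in> {1..<length w}" using that by (auto simp: L_def)
    then show ?thesis using sfG step_factor_pos_even[OF that(1), of d F c w] by auto
  qed
  have mp: "(w!m, w!((m+1) mod L)) \<in> set (minus_pairs w)" if "odd m" "m < L" for m
  proof -
    define i where "i = (m - 1) div 2"
    have i: "2*i+1 = m" "i < length w div 2" using that ev by (auto simp: i_def L_def elim!: oddE)
    have "minus_pairs w ! i = (w!m, w!((m+1) mod L))"
      using i by (simp add: minus_pairs_def L_def)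
    moreover have "i < length (minus_pairs w)" using i by (simp add: minus_pairs_def)
    ultimately show ?thesis by (metis nth_mem)
  qed
  have Hm: "0 < H (w!m) (w!((m+1) mod L))" if "odd m" "m < L" for m
    using HP mp[OF that] by fastforce
  have sf: "\<forall>j\<in>{1..<length (wrev w)}. 0 < step_factor d F H (wrev w) j"
  proof
    fix j assume "j \<in> {1..<length (wrev w)}"
    then have j: "1 \<le> j" "j < L" using lx by auto
    show "0 < step_factor d F H (wrev w) j"
    proof (cases "odd j")
      case True
      define m where "m = L - j"
      have m: "odd m" "1 \<le> m" "m < L" using True j ev by (auto simp: m_def L_def)
      have a: "wrev w ! j = w ! m" using xj j by (simp add: m_def)
      have b: "wrev w ! (j - 1) = w ! ((m+1) mod L)"
      proof (cases "j = 1")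
        case True then show ?thesis using x0 j by (simp add: m_def)
      next
        case False
        then have "m + 1 < L" using j by (simp add: m_def)
        moreover have "L - (j - 1) = m + 1" using j by (simp add: m_def)
        ultimately show ?thesis using xj[of "j-1"] False j by simp
      qed
      have nF: "\<not> in_F d F (w!m) (w!((m+1) mod L))"
      proof (cases "m = L - 1")
        case True
        then have "(m+1) mod L = 0" using j by simp
        then show ?thesis using cl True by (simp add: Mset_def L_def)
      next
        case False
        then have "m + 1 < L" using m by simp
        then have "w!(m+1) \<in> Mset d F (w!m)" using W2[of "m+1"] m by simp
        then show ?thesis using \<open>m + 1 < L\<close> by (simp add: Mset_def)
      qed
      have N: "wrev w ! j \<in> Nbr d F H (wrev w ! (j - 1))"
        using a b nF Hm[OF m(1) m(3)] by (simp add: Nbr_def)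
      have X: "j \<noteq> 1 \<Longrightarrow> wrev w ! j \<noteq> wrev w ! (j - 2)"
      proof -
        assume j1: "j \<noteq> 1"
        then have j3: "3 \<le> j" using True j by (auto elim!: oddE)
        then have "m + 2 < L" "odd (m+2)" using m j by (auto simp: m_def)
        then have "w!(m+2) \<notin> {w!m}" using W1[of "m+2"] by simp
        moreover have "wrev w ! (j - 2) = w ! (m + 2)" by (intro xj2) (use j3 j in \<open>auto simp: m_def\<close>)
        ultimately show ?thesis using a by simp
      qed
      show ?thesis using N X step_factor_pos_odd[OF True, of d F H "wrev w"] by auto
    next
      case False
      then have jev: "even j" by simp
      then have j2: "2 \<le> j" "j \<le> L - 2" using j ev by (auto simp: L_def elim!: evenE)
      define m where "m = L - j + 1"
      have m: "odd m" "3 \<le> m" "m < L" using jev j j2 ev by (auto simp: m_def L_def)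
      have a: "wrev w ! (j - 1) = w ! m" by (intro xj2) (use j j2 in \<open>auto simp: m_def\<close>)
      have c: "wrev w ! j = w ! (m - 1)" by (intro xj2) (use j j2 in \<open>auto simp: m_def\<close>)
      have nF: "\<not> in_F d F (w!m) (w!(m-1))" using W1[OF m(1) m(3)] by (simp add: Nbr_def)
      show ?thesis
      proof (cases "j = 2")
        case True
        then have mL: "m = L - 1" using j by (simp add: m_def)
        have "m - 1 = L - 2" using mL j by simp
        then have "w!(m-1) \<noteq> w!0" using cl by (auto simp: L_def)
        then show ?thesis using step_factor_pos_even[OF jev, of d F H "wrev w"] True a c nF x0
          by (simp add: Mset_def)
      next
        case False
        then have j4: "4 \<le> j" using jev j2 by (auto elim!: evenE)
        then have m1: "m + 1 < L" "even (m+1)" "2 \<le> m + 1" using m j by (auto simp: m_def)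
        have b: "wrev w ! (j - 2) = w ! (m + 1)" by (intro xj2) (use j j4 in \<open>auto simp: m_def\<close>)
        have w2: "\<not> (w!0 \<in> Mset d F (w!m) - {w!(m-1)}) \<and> w!(m+1) \<in> Mset d F (w!m) - {w!(m-1)}"
          using W2[OF m1(2) m1(3) m1(1)] by simp
        have "w!(m-1) \<noteq> w!0"
        proof -
          have "0 < (m - 1) div 2" "2 * ((m - 1) div 2) < length w" "2 * ((m - 1) div 2) = m - 1"
            using m by (auto simp: L_def elim!: oddE)
          then show ?thesis using i7 by metis
        qed
        then have "w!0 \<notin> Mset d F (w!m)" using w2 by auto
        then show ?thesis using step_factor_pos_even[OF jev, of d F H "wrev w"] a b c nF x0 w2
          by (auto simp: Mset_def)
      qed
    qed
  qed
  have cl': "wrev w ! 0 \<in> Mset d F (wrev w ! (length (wrev w) - 1)) - {wrev w ! (length (wrev w) - 2)}"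
  proof -
    have e1: "wrev w ! (L - 1) = w ! 1" by (intro xj2) (use len in \<open>auto simp: L_def\<close>)
    have e2: "wrev w ! (L - 2) = w ! 2" by (intro xj2) (use len in \<open>auto simp: L_def\<close>)
    have "w!1 \<in> Nbr d F c (w!0)" using W1[of 1] len by (simp add: L_def)
    then have "\<not> in_F d F (w!1) (w!0)" by (simp add: Nbr_def)
    moreover have "w!2 \<noteq> w!0" using W2[of 2] len by (simp add: L_def)
    ultimately show ?thesis using e1 e2 x0 lx by (auto simp: Mset_def)
  qed
  show ?thesis
    by (rule sel_prob_pos_intro) (use lx ev len sf cl' in \<open>auto simp: L_def\<close>)
qed


definition muf :: "'v::finite wgraph \<Rightarrow> 'v wgraph \<Rightarrow> int" where
  "muf G' c = (\<Sum>u\<in>UNIV. \<Sum>v\<in>UNIV. \<bar>int (G' u v) - int (c u v)\<bar>)"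

lemma ennreal_infsum_ge:
  assumes "a \<in> A" shows "(f a :: ennreal) \<le> infsum f A"
proof -
  have "infsum f {a} \<le> infsum f A"
    by (rule infsum_mono_neutral) (use assms in \<open>auto intro: nonneg_summable_on_complete\<close>)
  then show ?thesis by simp
qed

lemma strengths_from_int:
  fixes c :: "'v::finite wgraph"
  assumes "\<forall>x. Sout d (\<lambda>u v. int (c u v)) x = Sout d (\<lambda>u v. int (G0 u v)) x"
    and "\<forall>x. Sin d (\<lambda>u v. int (c u v)) x = Sin d (\<lambda>u v. int (G0 u v)) x"
  shows "same_strengths d G0 c"
proof (cases d)
  case True
  have "out_strength G0 x = out_strength c x \<and> in_strength G0 x = in_strength c x" for x
    using assms(1)[rule_format, of x] assms(2)[rule_format, of x] True
    by (simp add: Sout_def Sin_def out_strength_def in_strength_def flip: of_nat_sum)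
  then show ?thesis using True by (simp add: same_strengths_def)
next
  case False
  have "ustrength G0 x = ustrength c x" for x
    using assms(1)[rule_format, of x] False
    by (simp add: Sout_def ustrength_def flip: of_nat_sum)
  then show ?thesis using False by (simp add: same_strengths_def)
qed

context wsetup
begin

lemma exists_neg_D:
  assumes "G \<noteq> G'"
  shows "\<exists>a b. D a b < 0"
proof (rule ccontr)
  assume "\<not> ?thesis"
  then have nn: "\<And>a b. 0 \<le> D a b" by (meson not_less)
  have "D x v = 0" for x v using Sout_zero_nonneg[OF Sout_D nn] .
  then have "G = G'" by (auto simp: fun_eq_iff Df_def)
  then show False using assms by simp
qed

lemma step_exists:
  assumes "G \<noteq> G'"
  shows "\<exists>H\<in>graph_space d F G0. 0 < wgs_trans d F G0 G H \<and> muf G' H < muf G' G"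
proof -
  obtain a b where ab: "D a b < 0" using exists_neg_D[OF assms] by blast
  obtain w where w: "winv w" "even (length w)" "Mclose w"
    using walk_exists[OF winv_init[OF ab]] by blast
  define L where "L = length w"
  have L2: "2 \<le> L" using w by (simp add: winv_def L_def)
  have ne: "w \<noteq> []" using L2 L_def by auto
  have lastw: "last w = w ! (L - 1)" using ne by (simp add: L_def last_conv_nth)
  have mc: "w!0 \<in> Mset d F (w!(L - 1)) - {w!(L - 2)}"
    using w(3) lastw by (simp add: Mclose_def L_def)
  have L4: "4 \<le> L"
  proof -
    have "L \<noteq> 2" using mc by auto
    then show ?thesis using L2 w(2) L_def by presburger
  qed
  define N where "N = plus_pairs w"
  define P where "P = Pp w"
  define cl where "cl = (w!(L - 1), w!0)"
  have mpw: "minus_pairs w = P @ [cl]" using minus_pairs_Pp[OF w(2)] L2 by (simp add: P_def cl_def L_def)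
  define n where "n = n_w d w"
  have n_eq: "n u v = int (cnt d N u v) - int (cnt d (minus_pairs w) u v)" for u v
    by (simp add: n_def n_w_def N_def cnt_def)
  have n_eq2: "n u v = int (cnt d N u v) - int (cnt d P u v) - (if is_edge d u v cl then 1 else 0)" for u v
    by (simp add: n_eq mpw cnt_append cnt_single)
  have cN: "int (cnt d N u v) \<le> max 0 (- D u v)" for u v using w(1) by (simp add: winv_def N_def)
  have cP: "int (cnt d P u v) \<le> max 0 (D u v)" for u v using w(1) by (simp add: winv_def P_def)
  have nn: "0 \<le> int (G u v) + n_w d w u v * (- 1)" for u v
    using cN[of u v] n_eq[of u v] by (simp add: n_def Df_def)
  define H where "H = shift d w G (- 1)"
  have Hi: "int (H u v) = int (G u v) - n u v" for u v
    using shift_int[of G u v d w "-1", OF nn[of u v]] by (simp add: H_def n_def)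
  have bal: "fc N x - fc P x = (if x = w!(L-1) then 1 else 0) \<and> sc N x - sc P x = (if x = w!0 then 1 else 0)" for x
    using w(1) w(2) lastw unfolding winv_def N_def P_def L_def by metis
  have Soutn: "Sout d n x = 0" for x
  proof -
    have "Sout d n x = Sout d (\<lambda>u v. int (cnt d N u v)) x - Sout d (\<lambda>u v. int (cnt d P u v)) x
           - Sout d (\<lambda>u v. if is_edge d u v cl then 1 else 0) x"
      by (simp add: n_eq2[abs_def] Sout_diff)
    also have "\<dots> = 0" using bal[of x] unfolding Sout_cnt is_edge_sum_out by (auto simp: cl_def)
    finally show ?thesis .
  qed
  have Sinn: "Sin d n x = 0" for x
  proof -
    have "Sin d n x = Sin d (\<lambda>u v. int (cnt d N u v)) x - Sin d (\<lambda>u v. int (cnt d P u v)) x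
           - Sin d (\<lambda>u v. if is_edge d u v cl then 1 else 0) x"
      by (simp add: n_eq2[abs_def] Sin_diff)
    also have "\<dots> = 0" using bal[of x] unfolding Sin_cnt is_edge_sum_in by (auto simp: cl_def)
    finally show ?thesis .
  qed
  have Hfun: "(\<lambda>u v. int (H u v)) = (\<lambda>u v. int (G u v) - n u v)" using Hi by simp
  have nsym: "\<not> d \<Longrightarrow> n u v = n v u" for u v
    using cnt_sym[of d N u v] cnt_sym[of d "minus_pairs w" u v] by (simp add: n_eq)
  have HS: "H \<in> graph_space d F G0"
  proof -
    have g: "is_graph d H"
    proof (cases d)
      case False
      have "H u v = H v u" for u v using Hi[of u v] Hi[of v u] nsym[OF False] G_sym[OF False] by simp
      then show ?thesis by (simp add: is_graph_def)
    qed (simp add: is_graph_def)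
    have s: "same_strengths d G0 H"
    proof (rule strengths_from_int)
      show "\<forall>x. Sout d (\<lambda>u v. int (H u v)) x = Sout d (\<lambda>u v. int (G0 u v)) x"
        using Sout_diff[of d "\<lambda>u v. int (G u v)" n] Soutn strength_int(1)[OF GS] by (simp add: Hfun)
      show "\<forall>x. Sin d (\<lambda>u v. int (H u v)) x = Sin d (\<lambda>u v. int (G0 u v)) x"
        using Sin_diff[of d "\<lambda>u v. int (G u v)" n] Sinn strength_int(2)[OF GS] by (simp add: Hfun)
    qed
    have f: "H u v = G0 u v" if "in_F d F u v" for u v
    proof -
      have D0: "D u v = 0" using D_F[OF that] .
      have c1: "cnt d N u v = 0" "cnt d P u v = 0" using cN[of u v] cP[of u v] D0 by auto
      have "\<not> in_F d F (w!(L-1)) (w!0)" using mc by (simp add: Mset_def)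
      then have "\<not> is_edge d u v cl" using that in_F_sym[of d F] by (auto simp: is_edge_def cl_def)
      then have "n u v = 0" using c1 by (simp add: n_eq2)
      then have "H u v = G u v" using Hi[of u v] by simp
      also have "\<dots> = G0 u v" using GS that by (simp add: graph_space_def)
      finally show ?thesis .
    qed
    show ?thesis using g s f by (simp add: graph_space_def)
  qed
  have pw: "\<bar>int (G' u v) - int (H u v)\<bar> \<le> \<bar>D u v\<bar> - int (cnt d N u v) - int (cnt d P u v) + (if is_edge d u v cl then 1 else 0)" for u v
    using cN[of u v] cP[of u v] Hi[of u v] n_eq2[of u v] by (simp add: Df_def split: if_splits)
  have sN: "int (length N) \<le> (\<Sum>u\<in>UNIV. \<Sum>v\<in>UNIV. int (cnt d N u v))"
    using length_le_sum_cnt[of N d] by (simp flip: of_nat_sum)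
  have sP: "int (length P) \<le> (\<Sum>u\<in>UNIV. \<Sum>v\<in>UNIV. int (cnt d P u v))"
    using length_le_sum_cnt[of P d] by (simp flip: of_nat_sum)
  have lNP: "length N + length P = L - 1"
    using w(2) L2 by (simp add: N_def P_def plus_pairs_def Pp_def L_def)
  have "muf G' H \<le> (\<Sum>u\<in>UNIV. \<Sum>v\<in>UNIV. \<bar>D u v\<bar> - int (cnt d N u v) - int (cnt d P u v) + (if is_edge d u v cl then 1 else 0))"
    unfolding muf_def by (intro sum_mono pw)
  also have "\<dots> = muf G' G - (\<Sum>u\<in>UNIV. \<Sum>v\<in>UNIV. int (cnt d N u v)) - (\<Sum>u\<in>UNIV. \<Sum>v\<in>UNIV. int (cnt d P u v))
        + (\<Sum>u\<in>UNIV. \<Sum>v\<in>UNIV. (if is_edge d u v cl then 1 else 0))"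
    by (simp add: muf_def Df_def sum.distrib sum_subtractf)
  also have "\<dots> < muf G' G"
    using sN sP lNP L4 sum_cl_le2[of d cl] by linarith
  finally have mu_lt: "muf G' H < muf G' G" .
  have sfG: "\<forall>j\<in>{1..<length w}. 0 < step_factor d F G w j" using w(1) by (simp add: winv_def)
  have selG: "0 < sel_prob d F G w"
    by (rule sel_prob_pos_intro) (use w(2) L2 sfG mc in \<open>auto simp: L_def\<close>)
  have i7: "\<forall>i. 0 < i \<longrightarrow> 2*i < length w \<longrightarrow> w!(2*i) \<noteq> w!0" using w(1) by (simp add: winv_def)
  have HP: "\<forall>q\<in>set (minus_pairs w). 0 < H (fst q) (snd q)"
  proof
    fix q assume q: "q \<in> set (minus_pairs w)"
    have "0 < cnt d (minus_pairs w) (fst q) (snd q)" using cnt_pos_mem[OF q] .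
    moreover have "int (cnt d N (fst q) (snd q)) \<le> int (G (fst q) (snd q))"
      using cN[of "fst q" "snd q"] by (simp add: Df_def)
    ultimately have "0 < int (H (fst q) (snd q))"
      using Hi[of "fst q" "snd q"] n_eq[of "fst q" "snd q"] by linarith
    then show "0 < H (fst q) (snd q)" by simp
  qed
  have selH: "0 < sel_prob d F H (wrev w)"
    by (rule wrev_sel_pos[OF w(2) _ sfG _ i7 HP]) (use L4 mc in \<open>auto simp: L_def\<close>)
  have VH: "0 < Vprob d F H w"
    using selH sel_prob_nonneg[of d F H w] by (auto simp: Vprob_eq)
  have Hne: "H \<noteq> G" using mu_lt by auto
  have "\<exists>u v. n u v \<noteq> 0"
  proof (rule ccontr)
    assume "\<not> ?thesis"
    then have "H u v = G u v" for u v using Hi[of u v] by simp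
    then show False using Hne by (auto simp: fun_eq_iff)
  qed
  have e1: "\<exists>u v. 0 < n u v"
  proof (rule ccontr)
    assume "\<not> ?thesis"
    then have "\<And>u v. 0 \<le> - n u v" by (meson neg_0_le_iff_le not_less)
    moreover have "Sout d (\<lambda>u v. - n u v) x = 0" for x
      using Sout_diff[of d "\<lambda>u v. 0" n x] Soutn Sout_zero by simp
    ultimately have "- n x v = 0" for x v using Sout_zero_nonneg by blast
    then show False using \<open>\<exists>u v. n u v \<noteq> 0\<close> by simp
  qed
  have e2: "\<exists>u v. n u v < 0"
  proof (rule ccontr)
    assume "\<not> ?thesis"
    then have "\<And>u v. 0 \<le> n u v" by (meson not_less)
    then have "n x v = 0" for x v using Sout_zero_nonneg Soutn by blast
    then show False using \<open>\<exists>u v. n u v \<noteq> 0\<close> by simp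
  qed
  obtain u1 v1 where uv1: "0 < n u1 v1" using e1 by blast
  obtain u2 v2 where uv2: "n u2 v2 < 0" using e2 by blast
  have Dsub: "Dset d F G0 G w \<subseteq> {- int (G u1 v1) .. int (G u2 v2)}"
  proof
    fix \<Delta> assume "\<Delta> \<in> Dset d F G0 G w"
    then have h1: "0 \<le> int (G u1 v1) + n u1 v1 * \<Delta>" and h2: "0 \<le> int (G u2 v2) + n u2 v2 * \<Delta>"
      by (auto simp: Dset_def n_def)
    have "- int (G u1 v1) \<le> \<Delta>"
    proof (rule ccontr)
      assume "\<not> ?thesis"
      then have "\<Delta> < 0" by simp
      then have "n u1 v1 * \<Delta> \<le> \<Delta>" using uv1 by (simp add: mult_le_cancel_right1)
      then show False using h1 \<open>\<not> - int (G u1 v1) \<le> \<Delta>\<close> by linarith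
    qed
    moreover have "\<Delta> \<le> int (G u2 v2)"
    proof (rule ccontr)
      assume "\<not> ?thesis"
      then have "0 < \<Delta>" by simp
      then have "n u2 v2 * \<Delta> \<le> - \<Delta>" using uv2
        by (smt (verit, ccfv_SIG) mult_le_cancel_right1 mult_minus_left)
      then show False using h2 \<open>\<not> \<Delta> \<le> int (G u2 v2)\<close> by linarith
    qed
    ultimately show "\<Delta> \<in> {- int (G u1 v1) .. int (G u2 v2)}" by simp
  qed
  have Dfin: "finite (Dset d F G0 G w)" using finite_subset[OF Dsub] by simp
  have m1: "-1 \<in> {\<Delta> \<in> Dset d F G0 G w. shift d w G \<Delta> = H}"
    using nn HS by (simp add: Dset_def H_def)
  have num: "0 < (\<Sum>\<^sub>\<infinity>\<Delta>\<in>{\<Delta> \<in> Dset d F G0 G w. shift d w G \<Delta> = H}. ennreal (Vprob d F (shift d w G \<Delta>) w))"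
  proof -
    have "ennreal (Vprob d F (shift d w G (-1)) w) \<le> (\<Sum>\<^sub>\<infinity>\<Delta>\<in>{\<Delta> \<in> Dset d F G0 G w. shift d w G \<Delta> = H}. ennreal (Vprob d F (shift d w G \<Delta>) w))"
      by (rule ennreal_infsum_ge[OF m1])
    moreover have "0 < ennreal (Vprob d F (shift d w G (-1)) w)" using VH by (simp add: H_def)
    ultimately show ?thesis by order
  qed
  have den: "(\<Sum>\<^sub>\<infinity>\<Delta>\<in>Dset d F G0 G w. ennreal (Vprob d F (shift d w G \<Delta>) w)) < top"
    using Dfin by simp
  have trm: "0 < ennreal (sel_prob d F G w) *
        (\<Sum>\<^sub>\<infinity>\<Delta>\<in>{\<Delta> \<in> Dset d F G0 G w. shift d w G \<Delta> = H}. ennreal (Vprob d F (shift d w G \<Delta>) w)) /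
        (\<Sum>\<^sub>\<infinity>\<Delta>\<in>Dset d F G0 G w. ennreal (Vprob d F (shift d w G \<Delta>) w))"
    using selG num den by (simp add: ennreal_zero_less_divide ennreal_zero_less_mult_iff)
  have "0 < move_prob d F G0 G H"
    unfolding move_prob_def using trm ennreal_infsum_ge[of w UNIV] by (meson UNIV_I order_less_le_trans)
  then have "0 < wgs_trans d F G0 G H" using Hne by (simp add: wgs_trans_def)
  then show ?thesis using HS mu_lt by blast
qed

end


theorem proposition4:
  fixes d :: bool and F :: "('v::finite \<times> 'v) set" and G0 :: "'v wgraph"
  assumes "is_graph d G0"
  shows "(\<forall>G\<in>graph_space d F G0. \<forall>G'\<in>graph_space d F G0.
            wgs_trans d F G0 G G' = wgs_trans d F G0 G' G)
       \<and> (\<forall>G\<in>graph_space d F G0. \<forall>G'\<in>graph_space d F G0.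
            (\<lambda>H H'. H \<in> graph_space d F G0 \<and> 0 < wgs_trans d F G0 H H')\<^sup>*\<^sup>* G G')"
proof -
  define R where "R = (\<lambda>H H'. H \<in> graph_space d F G0 \<and> 0 < wgs_trans d F G0 H H')"
  have sym: "\<forall>G\<in>graph_space d F G0. \<forall>G'\<in>graph_space d F G0.
            wgs_trans d F G0 G G' = wgs_trans d F G0 G' G"
    using wgs_trans_sym by blast
  have reach: "\<forall>G\<in>graph_space d F G0. \<forall>G'\<in>graph_space d F G0. R\<^sup>*\<^sup>* G G'"
  proof (intro ballI)
    fix G G' assume G: "G \<in> graph_space d F G0" and G': "G' \<in> graph_space d F G0"
    have "\<forall>H. H \<in> graph_space d F G0 \<longrightarrow> nat (muf G' H) = k \<longrightarrow> R\<^sup>*\<^sup>* H G'" for k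
    proof (induction k rule: less_induct)
      case (less k)
      show ?case
      proof (intro allI impI)
        fix H assume H: "H \<in> graph_space d F G0" "nat (muf G' H) = k"
        show "R\<^sup>*\<^sup>* H G'"
        proof (cases "H = G'")
          case True then show ?thesis by simp
        next
          case False
          interpret wsetup d F G0 H G' using H(1) G' by unfold_locales
          obtain H2 where H2: "H2 \<in> graph_space d F G0" "0 < wgs_trans d F G0 H H2" "muf G' H2 < muf G' H"
            using step_exists[OF False] by blast
          have "0 \<le> muf G' H2" by (simp add: muf_def sum_nonneg)
          then have "nat (muf G' H2) < k" using H2(3) H(2) by linarith
          then have r2: "R\<^sup>*\<^sup>* H2 G'" using less H2(1) by blast
          have "R H H2" using H(1) H2(2) by (simp add: R_def)
          then show ?thesis using r2 by (rule converse_rtranclp_into_rtranclp)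
        qed
      qed
    qed
    then show "R\<^sup>*\<^sup>* G G'" using G by blast
  qed
  show ?thesis using sym reach unfolding R_def by blast
qed


end
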